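(* Under the standing assumptions (with $K\neq0$), suppose $\lambda_{\max}(M(0))<1$. Then there exists a unique $r^*\in(0,r_A)$ with $\lambda_{\max}(M(r^* ))=1$. Moreover $\lambda_{\max}(M(r))<1$ for $r\in[0,r^* )$ and $\lambda_{\max}(M(r))>1$ for $r\in(r^*,r_A)$; in the latter case there is no $\mathbf w\in\mathbb R^n$ with all $w_j>0$ and $\mathbf w^T(I-M(r))\ge\mathbf 0^T$.
   Context: Fix $n\ge 2$. $A$ and $K$ are $n\times n$ entrywise nonnegative real matrices, with $K$ not the zero matrix; $\delta_1,\dots,\delta_n\in(0,1]$, $D=K\,\mathrm{diag}(\delta_1,\dots,\delta_n)$, and $\tilde A=A+D$. $L=\mathrm{diag}(l_1,\dots,l_n)$ with all $l_j>0$. $B$ is an $n\times n$ entrywise nonnegative matrix with no zero column. Standing assumption: $\tilde A$ is irreducible and $\lambda_{\max}(\tilde A)<1$, where $\lambda_{\max}(X)$ denotes the spectral radius of a square matrix $X$. $r_A>0$ is defined by $\lambda_{\max}(\tilde A+r_AK)=1$. For $r\in[0,r_A)$, $M(r):=L[I-\tilde A-rK]^{-1}B$; note $M(0)=L(I-\tilde A)^{-1}B$. Vector inequalities are componentwise. *)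

theory Defs
  imports "Jordan_Normal_Form.Spectral_Radius" "Jordan_Normal_Form.Gauss_Jordan_Elimination"
begin

definition rho :: "real mat \<Rightarrow> real" where
  "rho X = spectral_radius (map_mat complex_of_real X)"

definition irreducible_mat :: "real mat \<Rightarrow> bool" where
  "irreducible_mat X \<longleftrightarrow>
     (\<forall>i<dim_row X. \<forall>j<dim_row X.
        (i, j) \<in> {(a, b). a < dim_row X \<and> b < dim_row X \<and> X $$ (a, b) \<noteq> 0}\<^sup>+)"

definition nonneg_mat :: "real mat \<Rightarrow> bool" where
  "nonneg_mat X \<longleftrightarrow> (\<forall>i<dim_row X. \<forall>j<dim_col X. X $$ (i, j) \<ge> 0)"

definition Mmat :: "nat \<Rightarrow> real mat \<Rightarrow> real mat \<Rightarrow> real mat \<Rightarrow> real mat \<Rightarrow> real \<Rightarrow> real mat" where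
  "Mmat n L At K B r = L * the (mat_inverse (1\<^sub>m n - At - r \<cdot>\<^sub>m K)) * B"

end

theory Submission
  imports Defs
begin


definition nn :: "nat \<Rightarrow> real mat \<Rightarrow> bool" where
  "nn n A \<longleftrightarrow> (\<forall>i<n. \<forall>j<n. 0 \<le> A$$(i,j))"
definition mle :: "nat \<Rightarrow> real mat \<Rightarrow> real mat \<Rightarrow> bool" where
  "mle n A B \<longleftrightarrow> (\<forall>i<n. \<forall>j<n. A$$(i,j) \<le> B$$(i,j))"
definition mpos :: "nat \<Rightarrow> real mat \<Rightarrow> bool" where
  "mpos n A \<longleftrightarrow> (\<forall>i<n. \<forall>j<n. 0 < A$$(i,j))"

lemma mult_ent: assumes "A \<in> carrier_mat n n" "B \<in> carrier_mat n n" "i<n" "j<n"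
  shows "(A*B)$$(i,j) = (\<Sum>k=0..<n. A$$(i,k) * B$$(k,j))"
  using assms by (simp add: scalar_prod_def)

lemma mv_ent: assumes "A \<in> carrier_mat n n" "v \<in> carrier_vec n" "i<n"
  shows "(A *\<^sub>v v)$i = (\<Sum>k=0..<n. A$$(i,k) * v$k)"
  using assms by (simp add: scalar_prod_def)

lemma nn_mult: assumes "A \<in> carrier_mat n n" "B \<in> carrier_mat n n" "nn n A" "nn n B"
  shows "nn n (A*B)"
  using assms unfolding nn_def by (auto simp: mult_ent simp del: index_mult_mat intro!: sum_nonneg)

lemma mle_mult_left: assumes "A \<in> carrier_mat n n" "B \<in> carrier_mat n n" "C \<in> carrier_mat n n"
  "nn n A" "mle n B C" shows "mle n (A*B) (A*C)"
  using assms unfolding nn_def mle_def by (auto simp: mult_ent simp del: index_mult_mat intro!: sum_mono mult_left_mono)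

lemma mle_mult_right: assumes "A \<in> carrier_mat n n" "B \<in> carrier_mat n n" "C \<in> carrier_mat n n"
  "nn n A" "mle n B C" shows "mle n (B*A) (C*A)"
  using assms unfolding nn_def mle_def by (auto simp: mult_ent simp del: index_mult_mat intro!: sum_mono mult_right_mono)

lemma ent_ge: assumes "A \<in> carrier_mat n n" "B \<in> carrier_mat n n" "nn n A" "nn n B"
  "i<n" "j<n" "k<n" shows "A$$(i,k) * B$$(k,j) \<le> (A*B)$$(i,j)"
proof -
  have "A$$(i,k) * B$$(k,j) \<le> (\<Sum>k=0..<n. A$$(i,k) * B$$(k,j))"
    by (rule member_le_sum) (use assms in \<open>auto simp: nn_def\<close>)
  thus ?thesis using assms by (simp add: mult_ent del: index_mult_mat)
qed

lemma mv_ge: assumes "A \<in> carrier_mat n n" "v \<in> carrier_vec n" "nn n A" "\<forall>i<n. 0 \<le> v$i"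
  "i<n" "k<n" shows "A$$(i,k) * v$k \<le> (A *\<^sub>v v)$i"
proof -
  have "A$$(i,k) * v$k \<le> (\<Sum>k=0..<n. A$$(i,k) * v$k)"
    by (rule member_le_sum) (use assms in \<open>auto simp: nn_def\<close>)
  thus ?thesis using assms by (simp add: mv_ent del: index_mult_mat_vec)
qed

lemma mv_nn: assumes "A \<in> carrier_mat n n" "v \<in> carrier_vec n" "nn n A" "\<forall>i<n. 0 \<le> v$i"
  "i<n" shows "0 \<le> (A *\<^sub>v v)$i"
  using assms unfolding nn_def by (auto simp: mv_ent simp del: index_mult_mat_vec intro!: sum_nonneg)

lemma mv_mono_vec: assumes "A \<in> carrier_mat n n" "u \<in> carrier_vec n" "v \<in> carrier_vec n" "nn n A"
  "\<forall>i<n. u$i \<le> v$i" "i<n" shows "(A *\<^sub>v u)$i \<le> (A *\<^sub>v v)$i"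
  using assms unfolding nn_def by (auto simp: mv_ent simp del: index_mult_mat_vec intro!: sum_mono mult_left_mono)

lemma mv_mono_mat: assumes "A \<in> carrier_mat n n" "B \<in> carrier_mat n n" "v \<in> carrier_vec n"
  "mle n A B" "\<forall>i<n. 0 \<le> v$i" "i<n" shows "(A *\<^sub>v v)$i \<le> (B *\<^sub>v v)$i"
  using assms unfolding mle_def by (auto simp: mv_ent simp del: index_mult_mat_vec intro!: sum_mono mult_right_mono)

lemma mv_pos: assumes "A \<in> carrier_mat n n" "v \<in> carrier_vec n" "mpos n A" "\<forall>i<n. 0 \<le> v$i"
  "k<n" "0 < v$k" "i<n" shows "0 < (A *\<^sub>v v)$i"
proof -
  have "0 < A$$(i,k) * v$k" using assms by (auto simp: mpos_def)
  also have "\<dots> \<le> (A *\<^sub>v v)$i" using assms by (intro mv_ge) (auto simp: nn_def mpos_def less_imp_le)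
  finally show ?thesis .
qed




abbreviation cm :: "real mat \<Rightarrow> complex mat" where "cm X \<equiv> map_mat complex_of_real X"

lemma rho_eig: assumes X: "X \<in> carrier_mat n n" and n: "n>0"
  shows "\<exists>lam z. z \<in> carrier_vec n \<and> z \<noteq> 0\<^sub>v n \<and> cm X *\<^sub>v z = lam \<cdot>\<^sub>v z \<and> cmod lam = rho X"
proof -
  have Xc: "cm X \<in> carrier_mat n n" using X by simp
  from spectral_radius_mem_max(1)[OF Xc n] obtain lam where
    "lam \<in> spectrum (cm X)" "rho X = cmod lam" unfolding rho_def by auto
  thus ?thesis unfolding spectrum_def eigenvalue_def eigenvector_def using X by auto
qed

lemma eig_le_rho: assumes X: "X \<in> carrier_mat n n"
  and z: "z \<in> carrier_vec n" "z \<noteq> 0\<^sub>v n" "cm X *\<^sub>v z = lam \<cdot>\<^sub>v z"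
  shows "cmod lam \<le> rho X"
proof -
  have Xc: "cm X \<in> carrier_mat n n" using X by simp
  have ev: "lam \<in> spectrum (cm X)" unfolding spectrum_def eigenvalue_def eigenvector_def
    using X z by auto
  hence "n > 0" using z by (cases n) auto
  from spectral_radius_mem_max(2)[OF Xc this] ev show ?thesis unfolding rho_def by auto
qed

lemma abs_ineq: assumes X: "X \<in> carrier_mat n n" and nX: "nn n X"
  and z: "z \<in> carrier_vec n" "cm X *\<^sub>v z = lam \<cdot>\<^sub>v z" and i: "i<n"
  shows "cmod lam * cmod (z$i) \<le> (\<Sum>k=0..<n. X$$(i,k) * cmod (z$k))"
proof -
  have e1: "(cm X *\<^sub>v z)$i = (\<Sum>k=0..<n. complex_of_real (X$$(i,k)) * z$k)"
    using X z(1) i by (simp add: scalar_prod_def)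
  have "lam * z$i = (cm X *\<^sub>v z)$i" using z i by simp
  with e1 have eq: "lam * z$i = (\<Sum>k=0..<n. complex_of_real (X$$(i,k)) * z$k)" by simp
  have "cmod lam * cmod (z$i) = cmod (\<Sum>k=0..<n. complex_of_real (X$$(i,k)) * z$k)"
    by (simp add: eq[symmetric] norm_mult)
  also have "\<dots> \<le> (\<Sum>k=0..<n. cmod (complex_of_real (X$$(i,k)) * z$k))" by (rule norm_sum)
  also have "\<dots> = (\<Sum>k=0..<n. X$$(i,k) * cmod (z$k))"
    using nX i by (intro sum.cong) (auto simp: norm_mult nn_def)
  finally show ?thesis .
qed

lemma z_nonzero: assumes "z \<in> carrier_vec n" "z \<noteq> 0\<^sub>v n" shows "\<exists>i<n. z$i \<noteq> 0"
proof (rule ccontr)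
  assume "\<not> ?thesis"
  hence "z = 0\<^sub>v n" using assms by (intro eq_vecI) auto
  thus False using assms by auto
qed

lemma EIG: assumes X: "X \<in> carrier_mat n n" and n: "n>0" and nX: "nn n X"
  shows "\<exists>v \<in> carrier_vec n. (\<forall>i<n. 0 \<le> v$i) \<and> (\<exists>i<n. 0 < v$i) \<and>
     (\<forall>i<n. rho X * v$i \<le> (X *\<^sub>v v)$i)"
proof -
  obtain lam z where z: "z \<in> carrier_vec n" "z \<noteq> 0\<^sub>v n" "cm X *\<^sub>v z = lam \<cdot>\<^sub>v z"
    and r: "cmod lam = rho X" using rho_eig[OF X n] by blast
  define v where "v = vec n (\<lambda>i. cmod (z$i))"
  have vc: "v \<in> carrier_vec n" unfolding v_def by simp
  obtain i where i: "i<n" "z$i \<noteq> 0" using z_nonzero[OF z(1,2)] by auto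
  show ?thesis
  proof (intro bexI[OF _ vc] conjI allI impI)
    show "\<exists>i<n. 0 < v$i" using i unfolding v_def by auto
    fix j assume j: "j<n"
    show "0 \<le> v$j" using j unfolding v_def by auto
    have "rho X * v$j = cmod lam * cmod (z$j)" using j r unfolding v_def by simp
    also have "\<dots> \<le> (\<Sum>k=0..<n. X$$(j,k) * cmod (z$k))" by (rule abs_ineq[OF X nX z(1,3) j])
    also have "\<dots> = (X *\<^sub>v v)$j" using X j vc by (simp add: mv_ent v_def del: index_mult_mat_vec)
    finally show "rho X * v$j \<le> (X *\<^sub>v v)$j" .
  qed
qed

lemma T1: assumes X: "X \<in> carrier_mat n n" and n: "n>0" and nX: "nn n X"
  and v: "v \<in> carrier_vec n" "\<forall>i<n. 0 < v$i" and le: "\<forall>i<n. (X *\<^sub>v v)$i \<le> c * v$i"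
  shows "rho X \<le> c"
proof -
  obtain lam z where z: "z \<in> carrier_vec n" "z \<noteq> 0\<^sub>v n" "cm X *\<^sub>v z = lam \<cdot>\<^sub>v z"
    and r: "cmod lam = rho X" using rho_eig[OF X n] by blast
  define f where "f i = cmod (z$i) / v$i" for i
  define t where "t = Max (f ` {0..<n})"
  have fin: "finite (f ` {0..<n})" "f ` {0..<n} \<noteq> {}" using n by auto
  obtain i0 where i0: "i0 < n" "t = f i0" using Max_in[OF fin] unfolding t_def by auto
  have ft: "f k \<le> t" if "k<n" for k unfolding t_def using fin that by (intro Max_ge) auto
  have zk: "cmod (z$k) \<le> t * v$k" if "k<n" for k
    using ft[OF that] v that unfolding f_def by (simp add: divide_le_eq)
  obtain i where i: "i<n" "z$i \<noteq> 0" using z_nonzero[OF z(1,2)] by auto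
  have "0 < f i" using i v unfolding f_def by auto
  hence tpos: "0 < t" using ft[OF i(1)] by linarith
  have zi0: "cmod (z$i0) = t * v$i0" using i0 v unfolding f_def by auto
  have "rho X * (t * v$i0) = cmod lam * cmod (z$i0)" using r zi0 by simp
  also have "\<dots> \<le> (\<Sum>k=0..<n. X$$(i0,k) * cmod (z$k))" by (rule abs_ineq[OF X nX z(1,3) i0(1)])
  also have "\<dots> \<le> (\<Sum>k=0..<n. X$$(i0,k) * (t * v$k))"
    using nX i0 zk by (intro sum_mono mult_left_mono) (auto simp: nn_def)
  also have "\<dots> = t * (X *\<^sub>v v)$i0" using X v i0
    by (simp add: mv_ent sum_distrib_left algebra_simps del: index_mult_mat_vec)
  also have "\<dots> \<le> t * (c * v$i0)" using le i0 tpos by (intro mult_left_mono) auto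
  finally have "rho X * (t * v$i0) \<le> c * (t * v$i0)" by (simp add: algebra_simps)
  moreover have "0 < t * v$i0" using tpos v i0 by auto
  ultimately show ?thesis by (rule mult_right_le_imp_le)
qed

lemma cm_smult: "cm (c \<cdot>\<^sub>m X) = complex_of_real c \<cdot>\<^sub>m cm X"
  by (intro eq_matI) auto

lemma eig_smult: assumes X: "Y \<in> carrier_mat n n" and z: "z \<in> carrier_vec n" "Y *\<^sub>v z = lam \<cdot>\<^sub>v z"
  shows "(a \<cdot>\<^sub>m Y) *\<^sub>v z = (a * lam) \<cdot>\<^sub>v z"
proof -
  have "(a \<cdot>\<^sub>m Y) *\<^sub>v z = a \<cdot>\<^sub>v (Y *\<^sub>v z)" using X z(1) by (intro eq_vecI) (auto simp: scalar_prod_def sum_distrib_left algebra_simps)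
  also have "\<dots> = (a * lam) \<cdot>\<^sub>v z" using z by (intro eq_vecI) (auto simp: mult.assoc)
  finally show ?thesis .
qed

lemma rho_smult_le: assumes X: "X \<in> carrier_mat n n" and n: "n>0" and c: "c > 0"
  shows "rho (c \<cdot>\<^sub>m X) \<le> c * rho X"
proof -
  have cX: "c \<cdot>\<^sub>m X \<in> carrier_mat n n" using X by simp
  obtain lam z where z: "z \<in> carrier_vec n" "z \<noteq> 0\<^sub>v n" "cm (c \<cdot>\<^sub>m X) *\<^sub>v z = lam \<cdot>\<^sub>v z"
    and r: "cmod lam = rho (c \<cdot>\<^sub>m X)" using rho_eig[OF cX n] by blast
  have "cm X = complex_of_real (1/c) \<cdot>\<^sub>m cm (c \<cdot>\<^sub>m X)" using c by (intro eq_matI) auto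
  hence "cm X *\<^sub>v z = (complex_of_real (1/c) * lam) \<cdot>\<^sub>v z"
    using eig_smult[of "cm (c \<cdot>\<^sub>m X)" n z lam "complex_of_real (1/c)"] X z by simp
  from eig_le_rho[OF X z(1,2) this] have "cmod (complex_of_real (1/c) * lam) \<le> rho X" .
  hence "rho (c \<cdot>\<^sub>m X) / c \<le> rho X" using c r by (simp add: norm_mult norm_divide)
  thus ?thesis using c by (simp add: divide_le_eq mult.commute)
qed

lemma rho_smult: assumes X: "X \<in> carrier_mat n n" and n: "n>0" and c: "c > 0"
  shows "rho (c \<cdot>\<^sub>m X) = c * rho X"
proof -
  have "(1/c) \<cdot>\<^sub>m (c \<cdot>\<^sub>m X) = X" using c by (intro eq_matI) auto
  hence "rho X = rho ((1/c) \<cdot>\<^sub>m (c \<cdot>\<^sub>m X))" by simp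
  also have "\<dots> \<le> (1/c) * rho (c \<cdot>\<^sub>m X)" using X n c by (intro rho_smult_le) auto
  finally have "c * rho X \<le> rho (c \<cdot>\<^sub>m X)" using c by (simp add: field_simps)
  with rho_smult_le[OF X n c] show ?thesis by linarith
qed

lemma rho_transpose: assumes X: "X \<in> carrier_mat n n"
  shows "rho (transpose_mat X) = rho X"
proof -
  have c: "cm X \<in> carrier_mat n n" "cm (transpose_mat X) \<in> carrier_mat n n" using X by auto
  have "cm (transpose_mat X) = transpose_mat (cm X)" by (simp add: map_mat_transpose)
  hence "spectrum (cm (transpose_mat X)) = spectrum (cm X)"
    using spectrum_root_char_poly[OF c(1)] spectrum_root_char_poly[OF c(2)] char_poly_transpose_mat[OF c(1)]
    by simp
  thus ?thesis unfolding rho_def spectral_radius_def by simp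
qed




lemma add_ent: "A \<in> carrier_mat n n \<Longrightarrow> B \<in> carrier_mat n n \<Longrightarrow> i<n \<Longrightarrow> j<n \<Longrightarrow>
  (A+B)$$(i,j) = A$$(i,j) + B$$(i,j)" by (rule index_add_mat) auto
lemma minus_ent: "A \<in> carrier_mat n n \<Longrightarrow> B \<in> carrier_mat n n \<Longrightarrow> i<n \<Longrightarrow> j<n \<Longrightarrow>
  (A-B)$$(i,j) = A$$(i,j) - B$$(i,j)" by (rule index_minus_mat) auto

lemma inv_exists: assumes R: "(R :: real mat) \<in> carrier_mat n n"
  and inj: "\<forall>v\<in>carrier_vec n. R *\<^sub>v v = 0\<^sub>v n \<longrightarrow> v = 0\<^sub>v n"
  shows "\<exists>Y. mat_inverse R = Some Y \<and> R * Y = 1\<^sub>m n \<and> Y * R = 1\<^sub>m n \<and> Y \<in> carrier_mat n n"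
proof -
  have "det R \<noteq> 0" using det_0_iff_vec_prod_zero_field[OF R] inj by auto
  from det_non_zero_imp_unit[OF R this] have U: "R \<in> Units (ring_mat TYPE(real) n ())" .
  show ?thesis
  proof (cases "mat_inverse R")
    case None
    have "R \<notin> Units (ring_mat TYPE(real) n ())" by (rule mat_inverse(1)[OF R None])
    with U show ?thesis by contradiction
  next
    case (Some Y)
    from mat_inverse(2)[OF R Some] Some show ?thesis by auto
  qed
qed

lemma one_not_eig: assumes X: "X \<in> carrier_mat n n" and r: "rho X < 1"
  shows "\<forall>v\<in>carrier_vec n. (1\<^sub>m n - X) *\<^sub>v v = 0\<^sub>v n \<longrightarrow> v = 0\<^sub>v n"
proof (intro ballI impI, rule ccontr)
  fix v :: "real vec" assume v: "v \<in> carrier_vec n" and e: "(1\<^sub>m n - X) *\<^sub>v v = 0\<^sub>v n" and nz: "v \<noteq> 0\<^sub>v n"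
  have "(1\<^sub>m n - X) *\<^sub>v v = v - X *\<^sub>v v" using minus_mult_distrib_mat_vec[of "1\<^sub>m n" n n X v] X v by simp
  with e have e': "v - X *\<^sub>v v = 0\<^sub>v n" by simp
  have Xv: "X *\<^sub>v v = v"
  proof (rule eq_vecI)
    fix i assume "i < dim_vec v"
    hence i: "i < n" using v by simp
    have "(v - X *\<^sub>v v)$i = 0" using e' i by simp
    thus "(X *\<^sub>v v)$i = v$i" using i v X by simp
  qed (use X v in simp)
  define z where "z = map_vec complex_of_real v"
  have zc: "z \<in> carrier_vec n" using v unfolding z_def by simp
  have "cm X *\<^sub>v z = map_vec complex_of_real (X *\<^sub>v v)" unfolding z_def
    using of_real_hom.mult_mat_vec_hom[OF X v] by (rule sym)
  also have "\<dots> = 1 \<cdot>\<^sub>v z" unfolding Xv z_def by (intro eq_vecI) auto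
  finally have ev: "cm X *\<^sub>v z = 1 \<cdot>\<^sub>v z" .
  obtain i where i: "i<n" "v$i \<noteq> 0" using z_nonzero[OF v nz] by auto
  have "z \<noteq> 0\<^sub>v n"
  proof
    assume "z = 0\<^sub>v n"
    hence "z$i = 0" using i by simp
    thus False using i v unfolding z_def by simp
  qed
  from eig_le_rho[OF X zc this ev] r show False by simp
qed

lemma nn_pow: assumes X: "X \<in> carrier_mat n n" "nn n X" shows "nn n (X ^\<^sub>m k)"
proof (induct k)
  case 0 thus ?case using X by (simp add: nn_def)
next
  case (Suc k) thus ?case using X by (simp add: nn_mult)
qed

lemma pow_smult: assumes X: "(X :: real mat) \<in> carrier_mat n n" shows "(a \<cdot>\<^sub>m X) ^\<^sub>m k = (a^k) \<cdot>\<^sub>m (X ^\<^sub>m k)"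
proof (induct k)
  case 0 thus ?case by (intro eq_matI) auto
next
  case (Suc k)
  have "(a \<cdot>\<^sub>m X) ^\<^sub>m Suc k = ((a^k) \<cdot>\<^sub>m (X ^\<^sub>m k)) * (a \<cdot>\<^sub>m X)" using Suc by simp
  also have "\<dots> = (a^k) \<cdot>\<^sub>m (a \<cdot>\<^sub>m (X ^\<^sub>m k * X))"
  proof -
    have Xk: "X ^\<^sub>m k \<in> carrier_mat n n" using X by simp
    show ?thesis using mult_smult_assoc_mat[OF Xk, of "a \<cdot>\<^sub>m X" n "a^k"] mult_smult_distrib[OF Xk X, of a] X
      by simp
  qed
  also have "\<dots> = (a ^ Suc k) \<cdot>\<^sub>m (X ^\<^sub>m Suc k)" by (intro eq_matI) auto
  finally show ?case .
qed

lemma pow_bound: assumes X: "X \<in> carrier_mat n n" and n: "n>0" and r: "rho X < 1"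
  shows "\<exists>q C. 0 < q \<and> q < 1 \<and> (\<forall>k. \<forall>i<n. \<forall>j<n. \<bar>(X ^\<^sub>m k)$$(i,j)\<bar> \<le> C * q^k)"
proof -
  have r0: "0 \<le> rho X" using rho_eig[OF X n] norm_ge_zero by metis
  define q where "q = (1 + rho X)/2"
  have q: "0 < q" "q < 1" "rho X < q" using r r0 unfolding q_def by auto
  define Xq where "Xq = (1/q) \<cdot>\<^sub>m X"
  have Xq: "Xq \<in> carrier_mat n n" using X unfolding Xq_def by simp
  have "rho Xq = (1/q) * rho X" unfolding Xq_def using rho_smult[OF X n, of "1/q"] q by simp
  also have "\<dots> < (1/q) * q" using q by (intro mult_strict_left_mono) auto
  finally have rq: "rho Xq < 1" using q by simp
  have cXq: "cm Xq \<in> carrier_mat n n" using Xq by simp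
  from spectral_radius_jnf_norm_bound_less_1_upper_triangular[OF cXq rq[unfolded rho_def]]
  obtain C where C: "\<And>k. norm_bound (cm Xq ^\<^sub>m k) C" by auto
  show ?thesis
  proof (intro exI conjI allI impI)
    fix k i j assume ij: "i<n" "j<n"
    have "cm Xq ^\<^sub>m k = cm (Xq ^\<^sub>m k)" using of_real_hom.mat_hom_pow[OF Xq] by (rule sym)
    with C[of k] have "norm ((cm (Xq ^\<^sub>m k)) $$ (i,j)) \<le> C" using ij Xq unfolding norm_bound_def
      by simp
    hence "\<bar>(Xq ^\<^sub>m k) $$ (i,j)\<bar> \<le> C" using ij Xq by simp
    moreover have "(Xq ^\<^sub>m k) $$ (i,j) = (1/q)^k * (X ^\<^sub>m k)$$(i,j)"
      unfolding Xq_def pow_smult[OF X] using ij X by simp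
    ultimately have "(1/q)^k * \<bar>(X ^\<^sub>m k)$$(i,j)\<bar> \<le> C" using q by (simp add: abs_mult)
    hence "q^k * ((1/q)^k * \<bar>(X ^\<^sub>m k)$$(i,j)\<bar>) \<le> q^k * C" using q by (intro mult_left_mono) auto
    thus "\<bar>(X ^\<^sub>m k)$$(i,j)\<bar> \<le> C * q^k" using q by (simp add: power_one_over field_simps)
  qed (use q in auto)
qed

lemma NEU: assumes X: "X \<in> carrier_mat n n" and n: "n>0" and nX: "nn n X" and r: "rho X < 1"
  shows "\<exists>Y. mat_inverse (1\<^sub>m n - X) = Some Y \<and> Y \<in> carrier_mat n n \<and> (1\<^sub>m n - X) * Y = 1\<^sub>m n
     \<and> Y * (1\<^sub>m n - X) = 1\<^sub>m n \<and> nn n Y \<and> mle n (1\<^sub>m n) Y \<and> Y = 1\<^sub>m n + X * Y"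
proof -
  have R: "1\<^sub>m n - X \<in> carrier_mat n n" using minus_carrier_mat[OF X] .
  obtain Y where Y: "mat_inverse (1\<^sub>m n - X) = Some Y" "(1\<^sub>m n - X) * Y = 1\<^sub>m n"
    "Y * (1\<^sub>m n - X) = 1\<^sub>m n" "Y \<in> carrier_mat n n"
    using inv_exists[OF R one_not_eig[OF X r]] by blast
  have "(1\<^sub>m n - X) * Y = Y - X * Y" using minus_mult_distrib_mat[of "1\<^sub>m n" n n X Y n] X Y(4) by simp
  with Y(2) have e: "Y - X * Y = 1\<^sub>m n" by simp
  have YXY: "Y = 1\<^sub>m n + X * Y"
  proof (rule eq_matI)
    fix i j assume ij: "i < dim_row (1\<^sub>m n + X * Y)" "j < dim_col (1\<^sub>m n + X * Y)"
    hence ij': "i<n" "j<n" using X Y(4) by auto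
    have "(Y - X * Y) $$ (i,j) = (1\<^sub>m n) $$ (i,j)" using e by simp
    moreover have "(Y - X * Y) $$ (i,j) = Y$$(i,j) - (X * Y) $$ (i,j)"
      by (rule index_minus_mat) (use ij' X Y(4) in auto)
    moreover have "(1\<^sub>m n + X * Y) $$ (i,j) = (1\<^sub>m n)$$(i,j) + (X * Y) $$ (i,j)"
      by (rule index_add_mat) (use ij' X Y(4) in auto)
    ultimately show "Y $$ (i,j) = (1\<^sub>m n + X * Y) $$ (i,j)" by linarith
  qed (use X Y in auto)
  have ind: "\<exists>P\<in>carrier_mat n n. nn n P \<and> Y = P + X ^\<^sub>m N * Y" for N
  proof (induct N)
    case 0
    show ?case by (intro bexI[of _ "0\<^sub>m n n"]) (use Y(4) X in \<open>auto simp: nn_def\<close>)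
  next
    case (Suc N)
    then obtain P where P: "P \<in> carrier_mat n n" "nn n P" "Y = P + X ^\<^sub>m N * Y" by auto
    have XN: "X ^\<^sub>m N \<in> carrier_mat n n" using X by simp
    have "X ^\<^sub>m N * Y = X ^\<^sub>m N * (1\<^sub>m n + X * Y)" using YXY by simp
    also have "\<dots> = X ^\<^sub>m N * 1\<^sub>m n + X ^\<^sub>m N * (X * Y)"
      by (rule mult_add_distrib_mat[OF XN one_carrier_mat mult_carrier_mat[OF X Y(4)]])
    also have "X ^\<^sub>m N * 1\<^sub>m n = X ^\<^sub>m N" by (rule right_mult_one_mat[OF XN])
    finally have s1: "X ^\<^sub>m N * Y = X ^\<^sub>m N + X ^\<^sub>m N * (X * Y)" .
    have s2: "X ^\<^sub>m N * (X * Y) = X ^\<^sub>m Suc N * Y" using assoc_mult_mat[OF XN X Y(4)] by simp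
    have "Y = P + (X ^\<^sub>m N + X ^\<^sub>m Suc N * Y)" using P(3) s1 s2 by simp
    also have "\<dots> = (P + X ^\<^sub>m N) + X ^\<^sub>m Suc N * Y" using P(1) XN X Y(4)
      by (intro assoc_add_mat[symmetric]) auto
    finally have "Y = (P + X ^\<^sub>m N) + X ^\<^sub>m Suc N * Y" .
    moreover have "nn n (P + X ^\<^sub>m N)" using P XN nn_pow[OF X nX, of N] by (auto simp: nn_def add_ent[OF P(1) XN])
    ultimately show ?case using P XN by (intro bexI[of _ "P + X ^\<^sub>m N"]) auto
  qed
  obtain q C where qC: "0 < q" "q < 1" "\<And>k i j. i<n \<Longrightarrow> j<n \<Longrightarrow> \<bar>(X ^\<^sub>m k)$$(i,j)\<bar> \<le> C * q^k"
    using pow_bound[OF X n r] by blast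
  have nnY: "nn n Y" unfolding nn_def
  proof (intro allI impI, rule ccontr)
    fix i j assume ij: "i<n" "j<n" and neg: "\<not> 0 \<le> Y$$(i,j)"
    define D where "D = max 1 (\<bar>C\<bar> * (\<Sum>k=0..<n. \<bar>Y$$(k,j)\<bar>))"
    have D: "D > 0" unfolding D_def by auto
    have bnd: "-(q^N * D) \<le> Y$$(i,j)" for N
    proof -
      obtain P where P: "P \<in> carrier_mat n n" "nn n P" "Y = P + X ^\<^sub>m N * Y" using ind by blast
      have XN: "X ^\<^sub>m N \<in> carrier_mat n n" using X by simp
      have "\<bar>(X ^\<^sub>m N * Y)$$(i,j)\<bar> = \<bar>\<Sum>k=0..<n. (X ^\<^sub>m N)$$(i,k) * Y$$(k,j)\<bar>"
        using XN Y(4) ij by (simp add: mult_ent del: index_mult_mat)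
      also have "\<dots> \<le> (\<Sum>k=0..<n. \<bar>(X ^\<^sub>m N)$$(i,k)\<bar> * \<bar>Y$$(k,j)\<bar>)"
        by (rule order_trans[OF sum_abs]) (simp add: abs_mult)
      also have "\<dots> \<le> (\<Sum>k=0..<n. (\<bar>C\<bar> * q^N) * \<bar>Y$$(k,j)\<bar>)"
        using qC ij by (intro sum_mono mult_right_mono) (auto intro: order_trans[OF qC(3)])
      also have "\<dots> = q^N * (\<bar>C\<bar> * (\<Sum>k=0..<n. \<bar>Y$$(k,j)\<bar>))" by (simp add: sum_distrib_left algebra_simps)
      also have "\<dots> \<le> q^N * D" unfolding D_def using qC by (intro mult_left_mono) auto
      finally have a: "\<bar>(X ^\<^sub>m N * Y)$$(i,j)\<bar> \<le> q^N * D" .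
      have "(P + X ^\<^sub>m N * Y)$$(i,j) = P$$(i,j) + (X ^\<^sub>m N * Y)$$(i,j)"
        by (rule index_add_mat) (use ij P(1) XN Y(4) in auto)
      hence "Y$$(i,j) = P$$(i,j) + (X ^\<^sub>m N * Y)$$(i,j)" using P(3) by simp
      moreover have "0 \<le> P$$(i,j)" using P(2) ij by (auto simp: nn_def)
      ultimately show ?thesis using a by linarith
    qed
    have "0 < - Y$$(i,j) / D" using neg D by (simp add: field_simps)
    from real_arch_pow_inv[OF this qC(2)] obtain N where "q^N < - Y$$(i,j) / D" by auto
    hence "q^N * D < - Y$$(i,j)" using D by (simp add: field_simps)
    with bnd[of N] show False by linarith
  qed
  have "mle n (1\<^sub>m n) Y" unfolding mle_def
  proof (intro allI impI)
    fix i j assume ij: "i<n" "j<n"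
    have "(1\<^sub>m n + X * Y)$$(i,j) = (1\<^sub>m n)$$(i,j) + (X*Y)$$(i,j)"
      by (rule index_add_mat) (use ij X Y(4) in auto)
    hence "Y$$(i,j) = (1\<^sub>m n)$$(i,j) + (X*Y)$$(i,j)" using YXY by simp
    moreover have "0 \<le> (X*Y)$$(i,j)" using nn_mult[OF X Y(4) nX nnY] ij by (auto simp: nn_def)
    ultimately show "(1\<^sub>m n)$$(i,j) \<le> Y$$(i,j)" by linarith
  qed
  with Y nnY YXY show ?thesis by blast
qed

lemma T3: assumes X: "X \<in> carrier_mat n n" and n: "n>0" and nX: "nn n X" and c: "c > 0"
  and u: "u \<in> carrier_vec n" "\<forall>i<n. 0 \<le> u$i" "\<exists>i<n. 0 < u$i"
  and ge: "\<forall>i<n. c * u$i \<le> (X *\<^sub>v u)$i"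
  shows "c \<le> rho X"
proof (rule ccontr)
  assume "\<not> c \<le> rho X"
  hence lt: "rho X < c" by simp
  define X' where "X' = (1/c) \<cdot>\<^sub>m X"
  have X': "X' \<in> carrier_mat n n" unfolding X'_def using X by simp
  have "rho X' = (1/c) * rho X" unfolding X'_def using rho_smult[OF X n, of "1/c"] c by simp
  also have "\<dots> < (1/c) * c" using lt c by (intro mult_strict_left_mono) auto
  finally have r': "rho X' < 1" using c by simp
  have nX': "nn n X'" using nX c X unfolding nn_def X'_def by auto
  obtain Y where Y: "Y \<in> carrier_mat n n" "Y * (1\<^sub>m n - X') = 1\<^sub>m n" "nn n Y"
    using NEU[OF X' n nX' r'] by blast
  define w where "w = (1\<^sub>m n - X') *\<^sub>v u"
  have wc: "w \<in> carrier_vec n" unfolding w_def carrier_vec_def using X' by simp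
  have w: "w$i \<le> 0" if i: "i<n" for i
  proof -
    have "w = u - X' *\<^sub>v u" unfolding w_def using minus_mult_distrib_mat_vec[of "1\<^sub>m n" n n X' u] X' u by simp
    hence "w$i = u$i - (X' *\<^sub>v u)$i" using i X' u by simp
    also have "(X' *\<^sub>v u)$i = (1/c) * (X *\<^sub>v u)$i"
    proof -
      have "(X' *\<^sub>v u)$i = (\<Sum>k=0..<n. X'$$(i,k) * u$k)" by (rule mv_ent[OF X' u(1) i])
      also have "\<dots> = (\<Sum>k=0..<n. (1/c) * (X$$(i,k) * u$k))" using i X unfolding X'_def
        by (intro sum.cong) auto
      also have "\<dots> = (1/c) * (X *\<^sub>v u)$i" using mv_ent[OF X u(1) i] by (simp add: sum_distrib_left)
      finally show ?thesis .
    qed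
    finally have "w$i = u$i - (1/c) * (X *\<^sub>v u)$i" .
    moreover have "c * u$i \<le> (X *\<^sub>v u)$i" using ge i by auto
    ultimately have "c * w$i \<le> c * 0" using c by (simp add: field_simps)
    thus ?thesis using c by (simp add: mult_le_0_iff)
  qed
  have "Y *\<^sub>v w = (Y * (1\<^sub>m n - X')) *\<^sub>v u" unfolding w_def
    using assoc_mult_mat_vec[of Y n n "1\<^sub>m n - X'" n u] Y X' u minus_carrier_mat[OF X'] by simp
  also have "\<dots> = u" using Y(2) u by simp
  finally have uY: "u = Y *\<^sub>v w" by simp
  obtain i where i: "i<n" "0 < u$i" using u by auto
  have "u$i = (\<Sum>k=0..<n. Y$$(i,k) * w$k)" using uY i Y wc by (simp add: mv_ent del: index_mult_mat_vec)
  also have "\<dots> \<le> 0" using Y(3) w i by (intro sum_nonpos) (auto simp: nn_def mult_nonneg_nonpos)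
  finally show False using i by simp
qed




lemma push: assumes X: "X \<in> carrier_mat n n" and P: "P \<in> carrier_mat n n" and nP: "nn n P"
  and com: "P * X = X * P" and v: "v \<in> carrier_vec n" and g: "g \<in> carrier_vec n"
  and ge: "\<forall>i<n. c * v$i + g$i \<le> (X *\<^sub>v v)$i"
  shows "\<forall>i<n. c * (P *\<^sub>v v)$i + (P *\<^sub>v g)$i \<le> (X *\<^sub>v (P *\<^sub>v v))$i"
proof (intro allI impI)
  fix i assume i: "i<n"
  have e: "X *\<^sub>v (P *\<^sub>v v) = P *\<^sub>v (X *\<^sub>v v)"
    using assoc_mult_mat_vec[OF X P v] assoc_mult_mat_vec[OF P X v] com by simp
  define h where "h = vec n (\<lambda>i. c * v$i + g$i)"
  have h: "h \<in> carrier_vec n" unfolding h_def by simp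
  have Xv: "X *\<^sub>v v \<in> carrier_vec n" using X v by simp
  have "(P *\<^sub>v h)$i \<le> (P *\<^sub>v (X *\<^sub>v v))$i"
    by (rule mv_mono_vec[OF P h Xv nP _ i]) (use ge in \<open>auto simp: h_def\<close>)
  moreover have "(P *\<^sub>v h)$i = c * (P *\<^sub>v v)$i + (P *\<^sub>v g)$i"
    using mv_ent[OF P h i] mv_ent[OF P v i] mv_ent[OF P g i]
    by (simp add: h_def sum_distrib_left sum.distrib algebra_simps)
  ultimately show "c * (P *\<^sub>v v)$i + (P *\<^sub>v g)$i \<le> (X *\<^sub>v (P *\<^sub>v v))$i" using e by simp
qed

lemma strict_incr: assumes X: "X \<in> carrier_mat n n" and P: "P \<in> carrier_mat n n" and n: "n>0"
  and nX: "nn n X" and pP: "mpos n P" and com: "P * X = X * P"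
  and v: "v \<in> carrier_vec n" "\<forall>i<n. 0 \<le> v$i" "\<exists>k<n. 0 < v$k"
  and g: "g \<in> carrier_vec n" "\<forall>i<n. 0 \<le> g$i" "\<exists>k<n. 0 < g$k"
  and c: "0 \<le> c" and ge: "\<forall>i<n. c * v$i + g$i \<le> (X *\<^sub>v v)$i"
  shows "c < rho X"
proof -
  have nP: "nn n P" using pP by (auto simp: nn_def mpos_def less_imp_le)
  define w where "w = P *\<^sub>v v"
  have wc: "w \<in> carrier_vec n" unfolding w_def using mult_mat_vec_carrier[OF P v(1)] .
  have wpos: "0 < w$i" if "i<n" for i using v that mv_pos[OF P v(1) pP v(2)] unfolding w_def by blast
  have gpos: "0 < (P *\<^sub>v g)$i" if "i<n" for i using g that mv_pos[OF P g(1) pP g(2)] by blast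
  define f where "f i = (P *\<^sub>v g)$i / w$i" for i
  define d where "d = Min (f ` {0..<n})"
  have fin: "finite (f ` {0..<n})" "f ` {0..<n} \<noteq> {}" using n by auto
  obtain i0 where i0: "i0<n" "d = f i0" using Min_in[OF fin] unfolding d_def by auto
  have dpos: "0 < d" using i0 gpos wpos unfolding f_def by auto
  have dle: "d \<le> f i" if "i<n" for i unfolding d_def using fin that by (intro Min_le) auto
  have p: "\<forall>i<n. c * w$i + (P *\<^sub>v g)$i \<le> (X *\<^sub>v w)$i"
    using push[OF X P nP com v(1) g(1) ge] unfolding w_def .
  have "c + d \<le> rho X"
  proof (rule T3[OF X n nX _ wc])
    show "0 < c + d" using c dpos by simp
    show "\<forall>i<n. 0 \<le> w$i" using wpos less_imp_le by blast
    show "\<exists>i<n. 0 < w$i" using wpos n by blast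
    show "\<forall>i<n. (c + d) * w$i \<le> (X *\<^sub>v w)$i"
    proof (intro allI impI)
      fix i assume i: "i<n"
      have "d * w$i \<le> f i * w$i" using dle[OF i] wpos[OF i] by (intro mult_right_mono) auto
      also have "f i * w$i = (P *\<^sub>v g)$i" unfolding f_def using wpos[OF i] by simp
      finally have "d * w$i \<le> (P *\<^sub>v g)$i" .
      moreover have "c * w$i + (P *\<^sub>v g)$i \<le> (X *\<^sub>v w)$i" using p i by blast
      ultimately show "(c + d) * w$i \<le> (X *\<^sub>v w)$i" by (simp add: algebra_simps)
    qed
  qed
  thus ?thesis using dpos by simp
qed

lemma make_pos: assumes X: "X \<in> carrier_mat n n" and P: "P \<in> carrier_mat n n"
  and pP: "mpos n P" and com: "P * X = X * P"
  and v: "v \<in> carrier_vec n" "\<forall>i<n. 0 \<le> v$i" "\<exists>k<n. 0 < v$k"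
  and ge: "\<forall>i<n. c * v$i \<le> (X *\<^sub>v v)$i"
  shows "\<exists>u\<in>carrier_vec n. (\<forall>i<n. 0 < u$i) \<and> (\<forall>i<n. c * u$i \<le> (X *\<^sub>v u)$i)"
proof (intro bexI conjI)
  have nP: "nn n P" using pP by (auto simp: nn_def mpos_def less_imp_le)
  show "\<forall>i<n. 0 < (P *\<^sub>v v)$i" using v mv_pos[OF P v(1) pP v(2)] by blast
  have "\<forall>i<n. c * (P *\<^sub>v v)$i + (P *\<^sub>v 0\<^sub>v n)$i \<le> (X *\<^sub>v (P *\<^sub>v v))$i"
    by (rule push[OF X P nP com v(1)]) (use ge in auto)
  thus "\<forall>i<n. c * (P *\<^sub>v v)$i \<le> (X *\<^sub>v (P *\<^sub>v v))$i" using P by simp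
  show "P *\<^sub>v v \<in> carrier_vec n" using mult_mat_vec_carrier[OF P v(1)] .
qed

lemma pow_mono: assumes A: "A \<in> carrier_mat n n" and B: "B \<in> carrier_mat n n"
  and nA: "nn n A" and AB: "mle n A B" shows "mle n (A ^\<^sub>m k) (B ^\<^sub>m k)"
proof (induct k)
  case 0 thus ?case using A B by (simp add: mle_def)
next
  case (Suc k)
  have Ak: "A ^\<^sub>m k \<in> carrier_mat n n" and Bk: "B ^\<^sub>m k \<in> carrier_mat n n" using A B by auto
  have nB: "nn n B" using nA AB unfolding nn_def mle_def by (meson order_trans)
  have "mle n (A ^\<^sub>m k * A) (B ^\<^sub>m k * A)" by (rule mle_mult_right[OF A Ak Bk nA Suc])
  moreover have "mle n (B ^\<^sub>m k * A) (B ^\<^sub>m k * B)" by (rule mle_mult_left[OF Bk A B nn_pow[OF B nB] AB])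
  ultimately have "mle n (A ^\<^sub>m k * A) (B ^\<^sub>m k * B)" unfolding mle_def by (meson order_trans)
  thus ?case by simp
qed

lemma comm_one_plus: assumes X: "(X :: real mat) \<in> carrier_mat n n" shows "(1\<^sub>m n + X) * X = X * (1\<^sub>m n + X)"
proof -
  have "(1\<^sub>m n + X) * X = 1\<^sub>m n * X + X * X" by (rule add_mult_distrib_mat[OF one_carrier_mat X X])
  also have "\<dots> = X * 1\<^sub>m n + X * X" using left_mult_one_mat[OF X] right_mult_one_mat[OF X] by simp
  also have "\<dots> = X * (1\<^sub>m n + X)" by (rule mult_add_distrib_mat[OF X one_carrier_mat X, symmetric])
  finally show ?thesis .
qed

lemma comm_pow: assumes X: "(X :: real mat) \<in> carrier_mat n n" and C: "C \<in> carrier_mat n n" and com: "C * X = X * C"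
  shows "C ^\<^sub>m m * X = X * C ^\<^sub>m m"
proof (induct m)
  case 0 thus ?case using left_mult_one_mat[OF X] right_mult_one_mat[OF X] C by simp
next
  case (Suc m)
  have Cm: "C ^\<^sub>m m \<in> carrier_mat n n" using C by simp
  have "C ^\<^sub>m Suc m * X = C ^\<^sub>m m * (C * X)" using assoc_mult_mat[OF Cm C X] by simp
  also have "\<dots> = (C ^\<^sub>m m * X) * C" using com assoc_mult_mat[OF Cm X C] by simp
  also have "\<dots> = X * (C ^\<^sub>m m * C)" using Suc assoc_mult_mat[OF X Cm C] by simp
  finally show ?case by simp
qed

lemma onepow_ge: assumes X: "X \<in> carrier_mat n n" and nX: "nn n X"
  shows "a \<le> m \<Longrightarrow> mle n (X ^\<^sub>m a) ((1\<^sub>m n + X) ^\<^sub>m m)"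
proof (induct m arbitrary: a)
  case 0 thus ?case using X by (simp add: mle_def)
next
  case (Suc m)
  define C where "C = (1\<^sub>m n + X) ^\<^sub>m m"
  have C: "C \<in> carrier_mat n n" unfolding C_def using X by simp
  have nC: "nn n C" unfolding C_def
    by (rule nn_pow) (use X nX in \<open>auto simp: nn_def add_ent[OF one_carrier_mat X]\<close>)
  have CX: "C * X \<in> carrier_mat n n" using C X by simp
  have eq: "(1\<^sub>m n + X) ^\<^sub>m Suc m = C + C * X"
  proof -
    have "(1\<^sub>m n + X) ^\<^sub>m Suc m = C * (1\<^sub>m n + X)" unfolding C_def by simp
    also have "\<dots> = C * 1\<^sub>m n + C * X" by (rule mult_add_distrib_mat[OF C one_carrier_mat X])
    also have "C * 1\<^sub>m n = C" by (rule right_mult_one_mat[OF C])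
    finally show ?thesis .
  qed
  have nCX: "nn n (C * X)" by (rule nn_mult[OF C X nC nX])
  show ?case
  proof (cases "a \<le> m")
    case True
    from Suc(1)[OF True] have "mle n (X ^\<^sub>m a) C" unfolding C_def .
    thus ?thesis unfolding eq using nCX by (auto simp: mle_def add_ent[OF C CX] nn_def intro: add_increasing2)
  next
    case False
    hence a: "a = Suc m" using Suc(2) by simp
    have Xm: "X ^\<^sub>m m \<in> carrier_mat n n" using X by simp
    from Suc(1)[of m] have "mle n (X ^\<^sub>m m) C" unfolding C_def by simp
    from mle_mult_right[OF X Xm C nX this] have "mle n (X ^\<^sub>m Suc m) (C * X)" by simp
    thus ?thesis unfolding eq a using nC by (auto simp: mle_def add_ent[OF C CX] nn_def intro: add_increasing)
  qed
qed

lemma path_pos: assumes A: "At \<in> carrier_mat n n" and nA: "nn n At" and i: "i<n"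
  and p: "(i, j) \<in> {(a, b). a < n \<and> b < n \<and> At $$ (a, b) \<noteq> 0}\<^sup>+"
  shows "\<exists>k. 0 < (At ^\<^sub>m k)$$(i,j)"
  using p
proof (induct rule: trancl_induct)
  case (base y)
  hence "0 < At$$(i,y)" using nA by (auto simp: nn_def order.not_eq_order_implies_strict)
  moreover have "At ^\<^sub>m 1 = At" using A by simp
  ultimately show ?case by (intro exI[of _ 1]) simp
next
  case (step y z)
  then obtain k where k: "0 < (At ^\<^sub>m k)$$(i,y)" by auto
  have yz: "y<n" "z<n" "0 < At$$(y,z)" using step(2) nA by (auto simp: nn_def order.not_eq_order_implies_strict)
  have Ak: "At ^\<^sub>m k \<in> carrier_mat n n" using A by simp
  have "0 < (At ^\<^sub>m k)$$(i,y) * At$$(y,z)" using k yz by simp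
  also have "\<dots> \<le> (At ^\<^sub>m k * At)$$(i,z)" by (rule ent_ge[OF Ak A nn_pow[OF A nA] nA i yz(2,1)])
  finally show ?case by (intro exI[of _ "Suc k"]) simp
qed

lemma IRR_POS: assumes A: "At \<in> carrier_mat n n" and nA: "nn n At" and n: "n>0"
  and irr: "irreducible_mat At"
  shows "\<exists>m. \<forall>X. X \<in> carrier_mat n n \<longrightarrow> mle n At X \<longrightarrow> mpos n ((1\<^sub>m n + X) ^\<^sub>m m)"
proof -
  have ex: "\<exists>k. 0 < (At ^\<^sub>m k)$$(i,j)" if "i<n" "j<n" for i j
    using path_pos[OF A nA that(1)] irr that A unfolding irreducible_mat_def by auto
  define kf where "kf = (\<lambda>(i,j). SOME k. 0 < (At ^\<^sub>m k)$$(i,j))"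
  have kf: "0 < (At ^\<^sub>m (kf (i,j)))$$(i,j)" if "i<n" "j<n" for i j
    unfolding kf_def using someI_ex[OF ex[OF that]] by simp
  define m where "m = Max (kf ` ({..<n} \<times> {..<n}))"
  have km: "kf (i,j) \<le> m" if "i<n" "j<n" for i j unfolding m_def using that by (intro Max_ge) auto
  show ?thesis
  proof (intro exI allI impI)
    fix X assume X: "X \<in> carrier_mat n n" and AX: "mle n At X"
    have nX: "nn n X" using nA AX unfolding nn_def mle_def by (meson order_trans)
    show "mpos n ((1\<^sub>m n + X) ^\<^sub>m m)" unfolding mpos_def
    proof (intro allI impI)
      fix i j assume ij: "i<n" "j<n"
      have "0 < (At ^\<^sub>m (kf (i,j)))$$(i,j)" by (rule kf[OF ij])
      also have "\<dots> \<le> (X ^\<^sub>m (kf (i,j)))$$(i,j)" using pow_mono[OF A X nA AX] ij by (auto simp: mle_def)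
      also have "\<dots> \<le> ((1\<^sub>m n + X) ^\<^sub>m m)$$(i,j)" using onepow_ge[OF X nX km[OF ij]] ij by (auto simp: mle_def)
      finally show "0 < ((1\<^sub>m n + X) ^\<^sub>m m)$$(i,j)" .
    qed
  qed
qed




lemma pos_lb: assumes "\<forall>i<(n::nat). 0 < (f i :: real)" shows "\<exists>c>0. \<forall>i<n. c \<le> f i"
proof (intro exI conjI allI impI)
  let ?S = "insert 1 (f ` {..<n})"
  have fin: "finite ?S" by simp
  show "0 < Min ?S" using assms by (subst Min_gr_iff) auto
  fix i assume "i<n" thus "Min ?S \<le> f i" by (intro Min_le) auto
qed

lemma pos_lb2: assumes "\<forall>i<(n::nat). \<forall>j<n. 0 < (f i j :: real)" shows "\<exists>c>0. \<forall>i<n. \<forall>j<n. c \<le> f i j"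
proof (intro exI conjI allI impI)
  let ?S = "insert 1 ((\<lambda>(i,j). f i j) ` ({..<n} \<times> {..<n}))"
  have fin: "finite ?S" by simp
  show "0 < Min ?S" using assms by (subst Min_gr_iff) auto
  fix i j assume "i<n" "j<n" thus "Min ?S \<le> f i j" by (intro Min_le) auto
qed

lemma GL_left: assumes X: "X \<in> carrier_mat n n" and N: "N \<in> carrier_mat n n"
  and nX: "nn n X" and le: "mle n (X * N) N" shows "mle n (X ^\<^sub>m a * N) N"
proof (induct a)
  case 0 thus ?case using N X by (simp add: mle_def)
next
  case (Suc a)
  have Xa: "X ^\<^sub>m a \<in> carrier_mat n n" using X by simp
  have "X ^\<^sub>m Suc a * N = X ^\<^sub>m a * (X * N)" using assoc_mult_mat[OF Xa X N] by simp
  moreover have "mle n (X ^\<^sub>m a * (X * N)) (X ^\<^sub>m a * N)"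
    by (rule mle_mult_left[OF Xa mult_carrier_mat[OF X N] N nn_pow[OF X nX] le])
  ultimately show ?case using Suc unfolding mle_def by (metis order_trans)
qed

lemma GL_right: assumes X: "X \<in> carrier_mat n n" and N: "N \<in> carrier_mat n n"
  and nX: "nn n X" and le: "mle n (N * X) N" shows "mle n (N * X ^\<^sub>m a) N"
proof (induct a)
  case 0 thus ?case using N X by (simp add: mle_def)
next
  case (Suc a)
  have Xa: "X ^\<^sub>m a \<in> carrier_mat n n" using X by simp
  have "N * X ^\<^sub>m Suc a = (N * X ^\<^sub>m a) * X" using assoc_mult_mat[OF N Xa X] by simp
  moreover have "mle n ((N * X ^\<^sub>m a) * X) (N * X)"
    by (rule mle_mult_right[OF X mult_carrier_mat[OF N Xa] N nX Suc])
  ultimately show ?case using le unfolding mle_def by (metis order_trans)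
qed

locale setting =
  fixes n :: nat and At K B Lm :: "real mat" and l :: "nat \<Rightarrow> real" and rA :: real
  assumes n: "n > 0"
  and At: "At \<in> carrier_mat n n" and K: "K \<in> carrier_mat n n" and B: "B \<in> carrier_mat n n"
  and Lm: "Lm = mat_diag n l" and l: "\<forall>j<n. 0 < l j"
  and nAt: "nn n At" and nK: "nn n K" and nB: "nn n B"
  and Kpos: "\<exists>a<n. \<exists>b<n. 0 < K$$(a,b)"
  and Bcol: "\<forall>j<n. \<exists>i<n. 0 < B$$(i,j)"
  and irr: "irreducible_mat At"
  and rho0: "rho At < 1"
  and rA: "0 < rA" and rhoA: "rho (At + rA \<cdot>\<^sub>m K) = 1"
begin

definition "T r = At + r \<cdot>\<^sub>m K"
definition "N r = the (mat_inverse (1\<^sub>m n - At - r \<cdot>\<^sub>m K))"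
definition "M r = Mmat n Lm At K B r"

lemma M_eq: "M r = Lm * N r * B" unfolding M_def Mmat_def N_def ..

lemma T_carrier: "T r \<in> carrier_mat n n" unfolding T_def using At K by simp

lemma T_ent: "i<n \<Longrightarrow> j<n \<Longrightarrow> (T r)$$(i,j) = At$$(i,j) + r * K$$(i,j)"
  unfolding T_def using At K by simp

lemma T_ge: "0 \<le> r \<Longrightarrow> mle n At (T r)"
  using nK by (auto simp: mle_def T_ent nn_def)

lemma T_nn: "0 \<le> r \<Longrightarrow> nn n (T r)"
  using nK nAt by (auto simp: nn_def T_ent)

lemma R_eq: "1\<^sub>m n - At - r \<cdot>\<^sub>m K = 1\<^sub>m n - T r"
  by (rule eq_matI) (use At K in \<open>auto simp: T_def\<close>)

lemma T_mv: assumes u: "u \<in> carrier_vec n" and i: "i<n"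
  shows "(T s *\<^sub>v u)$i = (T r *\<^sub>v u)$i + (s - r) * (K *\<^sub>v u)$i"
proof -
  have "(T s *\<^sub>v u)$i = (\<Sum>k=0..<n. (T s)$$(i,k) * u$k)" by (rule mv_ent[OF T_carrier u i])
  also have "\<dots> = (\<Sum>k=0..<n. (T r)$$(i,k) * u$k + (s - r) * (K$$(i,k) * u$k))"
    using i by (intro sum.cong) (auto simp: T_ent algebra_simps)
  also have "\<dots> = (T r *\<^sub>v u)$i + (s - r) * (K *\<^sub>v u)$i"
    using mv_ent[OF T_carrier u i, of r] mv_ent[OF K u i] by (simp add: sum.distrib sum_distrib_left)
  finally show ?thesis .
qed

definition "m0 = (SOME m. \<forall>X. X \<in> carrier_mat n n \<longrightarrow> mle n At X \<longrightarrow> mpos n ((1\<^sub>m n + X) ^\<^sub>m m))"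

lemma Pm_pos: "X \<in> carrier_mat n n \<Longrightarrow> mle n At X \<Longrightarrow> mpos n ((1\<^sub>m n + X) ^\<^sub>m m0)"
  using someI_ex[OF IRR_POS[OF At nAt n irr]] unfolding m0_def by blast

lemma Pm_comm: assumes X: "(X :: real mat) \<in> carrier_mat n n" shows "(1\<^sub>m n + X) ^\<^sub>m m0 * X = X * (1\<^sub>m n + X) ^\<^sub>m m0"
  by (rule comm_pow[OF X add_carrier_mat[OF X] comm_one_plus[OF X]])

lemma Pm_carrier: "(X :: real mat) \<in> carrier_mat n n \<Longrightarrow> (1\<^sub>m n + X) ^\<^sub>m m0 \<in> carrier_mat n n"
  by simp

lemma K_u_pos: assumes u: "u \<in> carrier_vec n" "\<forall>i<n. 0 < u$i"
  shows "\<exists>k<n. 0 < (K *\<^sub>v u)$k"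
proof -
  obtain a b where ab: "a<n" "b<n" "0 < K$$(a,b)" using Kpos by auto
  have "0 < K$$(a,b) * u$b" using ab u by simp
  also have "\<dots> \<le> (K *\<^sub>v u)$a" by (rule mv_ge[OF K u(1) nK]) (use u ab in \<open>auto simp: less_imp_le\<close>)
  finally show ?thesis using ab by auto
qed

lemma rhoT_lt: assumes r: "0 \<le> r" "r < rA" shows "rho (T r) < 1"
proof (rule ccontr)
  assume "\<not> ?thesis" hence ge: "1 \<le> rho (T r)" by simp
  obtain v where v: "v \<in> carrier_vec n" "\<forall>i<n. 0 \<le> v$i" "\<exists>i<n. 0 < v$i"
    "\<forall>i<n. rho (T r) * v$i \<le> (T r *\<^sub>v v)$i" using EIG[OF T_carrier n T_nn[OF r(1)]] by blast
  have v1: "\<forall>i<n. 1 * v$i \<le> (T r *\<^sub>v v)$i"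
  proof (intro allI impI)
    fix i assume i: "i<n"
    have "1 * v$i \<le> rho (T r) * v$i" using ge v(2) i by (intro mult_right_mono) auto
    thus "1 * v$i \<le> (T r *\<^sub>v v)$i" using v(4) i by (meson order_trans)
  qed
  obtain u where u: "u \<in> carrier_vec n" "\<forall>i<n. 0 < u$i" "\<forall>i<n. 1 * u$i \<le> (T r *\<^sub>v u)$i"
    using make_pos[OF T_carrier Pm_carrier[OF T_carrier] Pm_pos[OF T_carrier T_ge[OF r(1)]]
      Pm_comm[OF T_carrier] v(1,2,3) v1] by blast
  define g where "g = vec n (\<lambda>i. (rA - r) * (K *\<^sub>v u)$i)"
  have gc: "g \<in> carrier_vec n" unfolding g_def by simp
  have Ku0: "\<forall>i<n. 0 \<le> (K *\<^sub>v u)$i" using mv_nn[OF K u(1) nK] u(2) less_imp_le by blast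
  have g0: "\<forall>i<n. 0 \<le> g$i" using Ku0 r unfolding g_def by auto
  have gp: "\<exists>k<n. 0 < g$k" using K_u_pos[OF u(1,2)] r unfolding g_def by auto
  have "1 < rho (T rA)"
  proof (rule strict_incr[OF T_carrier Pm_carrier[OF T_carrier] n T_nn Pm_pos[OF T_carrier T_ge]
      Pm_comm[OF T_carrier] u(1) _ _ gc g0 gp])
    show "0 \<le> rA" using rA by simp
    show "0 \<le> rA" using rA by simp
    show "\<forall>i<n. 0 \<le> u$i" using u(2) less_imp_le by blast
    show "\<exists>k<n. 0 < u$k" using u(2) n by blast
    show "\<forall>i<n. 1 * u$i + g$i \<le> (T rA *\<^sub>v u)$i"
      using u(3) T_mv[OF u(1), of _ rA r] unfolding g_def by auto
  qed simp
  thus False using rhoA unfolding T_def by simp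
qed

lemma N_props: assumes r: "0 \<le> r" "r < rA"
  shows "N r \<in> carrier_mat n n" "(1\<^sub>m n - T r) * N r = 1\<^sub>m n" "N r * (1\<^sub>m n - T r) = 1\<^sub>m n"
    "nn n (N r)" "mle n (1\<^sub>m n) (N r)" "N r = 1\<^sub>m n + T r * N r"
proof -
  obtain Y where Y: "mat_inverse (1\<^sub>m n - T r) = Some Y" "Y \<in> carrier_mat n n" "(1\<^sub>m n - T r) * Y = 1\<^sub>m n"
     "Y * (1\<^sub>m n - T r) = 1\<^sub>m n" "nn n Y" "mle n (1\<^sub>m n) Y" "Y = 1\<^sub>m n + T r * Y"
    using NEU[OF T_carrier n T_nn[OF r(1)] rhoT_lt[OF r]] by blast
  have "N r = Y" unfolding N_def R_eq Y(1) by simp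
  thus "N r \<in> carrier_mat n n" "(1\<^sub>m n - T r) * N r = 1\<^sub>m n" "N r * (1\<^sub>m n - T r) = 1\<^sub>m n"
    "nn n (N r)" "mle n (1\<^sub>m n) (N r)" "N r = 1\<^sub>m n + T r * N r" using Y by auto
qed

lemma N_fix: assumes r: "0 \<le> r" "r < rA" and ij: "i<n" "j<n"
  shows "(N r)$$(i,j) = (1\<^sub>m n)$$(i,j) + (T r * N r)$$(i,j)"
    "(N r)$$(i,j) = (1\<^sub>m n)$$(i,j) + (N r * T r)$$(i,j)"
proof -
  note NP = N_props[OF r]
  show "(N r)$$(i,j) = (1\<^sub>m n)$$(i,j) + (T r * N r)$$(i,j)"
    using arg_cong[OF NP(6), of "\<lambda>X. X$$(i,j)"] add_ent[OF one_carrier_mat mult_carrier_mat[OF T_carrier NP(1)] ij]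
    by simp
  have "N r * (1\<^sub>m n - T r) = N r * 1\<^sub>m n - N r * T r"
    by (rule mult_minus_distrib_mat[OF NP(1) one_carrier_mat T_carrier])
  also have "N r * 1\<^sub>m n = N r" by (rule right_mult_one_mat[OF NP(1)])
  finally have "N r - N r * T r = 1\<^sub>m n" using NP(3) by simp
  hence "(N r - N r * T r)$$(i,j) = (1\<^sub>m n)$$(i,j)" by simp
  thus "(N r)$$(i,j) = (1\<^sub>m n)$$(i,j) + (N r * T r)$$(i,j)"
    using minus_ent[OF NP(1) mult_carrier_mat[OF NP(1) T_carrier] ij] by simp
qed

lemma resolvent: assumes r: "0 \<le> r" "r < rA" and s: "0 \<le> s" "s < rA" and ij: "i<n" "j<n"
  shows "(N s)$$(i,j) = (N r)$$(i,j) + (s - r) * (N s * K * N r)$$(i,j)"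
proof -
  note Nr = N_props[OF r] and Ns = N_props[OF s]
  have Rr: "1\<^sub>m n - T r \<in> carrier_mat n n" and Rs: "1\<^sub>m n - T s \<in> carrier_mat n n"
    using T_carrier by (auto intro: minus_carrier_mat)
  have sK: "(s - r) \<cdot>\<^sub>m K \<in> carrier_mat n n" using K by simp
  have RR: "1\<^sub>m n - T r = (1\<^sub>m n - T s) + (s - r) \<cdot>\<^sub>m K"
    by (rule eq_matI) (use At K in \<open>auto simp: T_def algebra_simps\<close>)
  have "N s = N s * ((1\<^sub>m n - T r) * N r)" using Nr(2) right_mult_one_mat[OF Ns(1)] by simp
  also have "\<dots> = N s * (1\<^sub>m n - T r) * N r" using assoc_mult_mat[OF Ns(1) Rr Nr(1)] by simp
  also have "N s * (1\<^sub>m n - T r) = N s * (1\<^sub>m n - T s) + N s * ((s - r) \<cdot>\<^sub>m K)"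
    unfolding RR by (rule mult_add_distrib_mat[OF Ns(1) Rs sK])
  also have "\<dots> = 1\<^sub>m n + N s * ((s - r) \<cdot>\<^sub>m K)" using Ns(3) by simp
  also have "(1\<^sub>m n + N s * ((s - r) \<cdot>\<^sub>m K)) * N r = 1\<^sub>m n * N r + N s * ((s - r) \<cdot>\<^sub>m K) * N r"
    by (rule add_mult_distrib_mat[OF one_carrier_mat mult_carrier_mat[OF Ns(1) sK] Nr(1)])
  also have "1\<^sub>m n * N r = N r" by (rule left_mult_one_mat[OF Nr(1)])
  also have "N s * ((s - r) \<cdot>\<^sub>m K) * N r = (s - r) \<cdot>\<^sub>m (N s * K * N r)"
    using mult_smult_distrib[OF Ns(1) K, of "s-r"] mult_smult_assoc_mat[OF mult_carrier_mat[OF Ns(1) K] Nr(1)]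
    by simp
  finally have e: "N s = N r + (s - r) \<cdot>\<^sub>m (N s * K * N r)" .
  have c: "(s - r) \<cdot>\<^sub>m (N s * K * N r) \<in> carrier_mat n n" using Ns(1) K Nr(1) by simp
  show ?thesis using arg_cong[OF e, of "\<lambda>X. X$$(i,j)"] add_ent[OF Nr(1) c ij] ij Ns(1) Nr(1) K by simp
qed

lemma NKN_nn: assumes r: "0 \<le> r" "r < rA" and s: "0 \<le> s" "s < rA" shows "nn n (N s * K * N r)"
  using nn_mult[OF mult_carrier_mat[OF N_props(1)[OF s] K] N_props(1)[OF r] nn_mult[OF N_props(1)[OF s] K N_props(4)[OF s] nK] N_props(4)[OF r]] .

lemma N_mono: assumes r: "0 \<le> r" and rs: "r \<le> s" and s: "s < rA" shows "mle n (N r) (N s)"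
  unfolding mle_def
proof (intro allI impI)
  fix i j assume ij: "i<n" "j<n"
  have "0 \<le> (N s * K * N r)$$(i,j)" using NKN_nn[of r s] r rs s ij by (auto simp: nn_def)
  thus "(N r)$$(i,j) \<le> (N s)$$(i,j)" using resolvent[of r s i j] r rs s ij by simp
qed

definition "gam = (SOME g. 0 < g \<and> (\<forall>i<n. \<forall>j<n. \<exists>k. g \<le> (At ^\<^sub>m k)$$(i,j)))"

lemma gam: "0 < gam" "i<n \<Longrightarrow> j<n \<Longrightarrow> \<exists>k. gam \<le> (At ^\<^sub>m k)$$(i,j)"
proof -
  have ex: "\<exists>k. 0 < (At ^\<^sub>m k)$$(i,j)" if "i<n" "j<n" for i j
    using path_pos[OF At nAt that(1)] irr that At unfolding irreducible_mat_def by auto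
  define kf where "kf i j = (SOME k. 0 < (At ^\<^sub>m k)$$(i,j))" for i j
  have kf: "0 < (At ^\<^sub>m (kf i j))$$(i,j)" if "i<n" "j<n" for i j
    unfolding kf_def using someI_ex[OF ex[OF that]] .
  obtain c where c: "0 < c" "\<forall>i<n. \<forall>j<n. c \<le> (At ^\<^sub>m (kf i j))$$(i,j)"
    using pos_lb2[of n "\<lambda>i j. (At ^\<^sub>m (kf i j))$$(i,j)"] kf by blast
  have "\<exists>g. 0 < g \<and> (\<forall>i<n. \<forall>j<n. \<exists>k. g \<le> (At ^\<^sub>m k)$$(i,j))" using c by blast
  from someI_ex[OF this] have "0 < gam \<and> (\<forall>i<n. \<forall>j<n. \<exists>k. gam \<le> (At ^\<^sub>m k)$$(i,j))"
    unfolding gam_def .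
  thus "0 < gam" "i<n \<Longrightarrow> j<n \<Longrightarrow> \<exists>k. gam \<le> (At ^\<^sub>m k)$$(i,j)" by auto
qed

lemma Tpow_ge: assumes r: "0 \<le> r" and ij: "i<n" "j<n" shows "\<exists>k. gam \<le> (T r ^\<^sub>m k)$$(i,j)"
proof -
  obtain k where k: "gam \<le> (At ^\<^sub>m k)$$(i,j)" using gam(2)[OF ij] by auto
  have "(At ^\<^sub>m k)$$(i,j) \<le> (T r ^\<^sub>m k)$$(i,j)" using pow_mono[OF At T_carrier nAt T_ge[OF r]] ij
    by (auto simp: mle_def)
  thus ?thesis using k by (intro exI[of _ k]) simp
qed

lemma N_left: assumes r: "0 \<le> r" "r < rA" shows "mle n (T r ^\<^sub>m a * N r) (N r)"
proof (rule GL_left[OF T_carrier N_props(1)[OF r] T_nn[OF r(1)]])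
  show "mle n (T r * N r) (N r)" unfolding mle_def
  proof (intro allI impI)
    fix i j assume ij: "i<n" "j<n"
    show "(T r * N r)$$(i,j) \<le> (N r)$$(i,j)" using N_fix(1)[OF r ij] ij by simp
  qed
qed

lemma N_right: assumes r: "0 \<le> r" "r < rA" shows "mle n (N r * T r ^\<^sub>m a) (N r)"
proof (rule GL_right[OF T_carrier N_props(1)[OF r] T_nn[OF r(1)]])
  show "mle n (N r * T r) (N r)" unfolding mle_def
  proof (intro allI impI)
    fix i j assume ij: "i<n" "j<n"
    show "(N r * T r)$$(i,j) \<le> (N r)$$(i,j)" using N_fix(2)[OF r ij] ij by simp
  qed
qed

lemma N_lb: assumes r: "0 \<le> r" "r < rA" and ij: "i<n" "j<n" shows "gam \<le> (N r)$$(i,j)"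
proof -
  note NP = N_props[OF r]
  obtain k where k: "gam \<le> (T r ^\<^sub>m k)$$(i,j)" using Tpow_ge[OF r(1) ij] by auto
  have Tk: "T r ^\<^sub>m k \<in> carrier_mat n n" using T_carrier by simp
  have "mle n (T r ^\<^sub>m k * 1\<^sub>m n) (T r ^\<^sub>m k * N r)"
    by (rule mle_mult_left[OF Tk one_carrier_mat NP(1) nn_pow[OF T_carrier T_nn[OF r(1)]] NP(5)])
  hence "(T r ^\<^sub>m k)$$(i,j) \<le> (T r ^\<^sub>m k * N r)$$(i,j)" using ij right_mult_one_mat[OF Tk] by (auto simp: mle_def)
  also have "\<dots> \<le> (N r)$$(i,j)" using N_left[OF r, of k] ij by (auto simp: mle_def)
  finally show ?thesis using k by simp
qed

lemma N_pos: assumes r: "0 \<le> r" "r < rA" shows "mpos n (N r)"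
  using N_lb[OF r] gam(1) unfolding mpos_def by (meson less_le_trans)

lemma N_comp: assumes r: "0 \<le> r" "r < rA" and pq: "p<n" "q<n" and ij: "i<n" "j<n"
  shows "gam * gam * (N r)$$(i,j) \<le> (N r)$$(p,q)"
proof -
  note NP = N_props[OF r]
  have Tn: "nn n (T r)" using T_nn[OF r(1)] .
  obtain a where a: "gam \<le> (T r ^\<^sub>m a)$$(p,i)" using Tpow_ge[OF r(1) pq(1) ij(1)] by auto
  obtain b where b: "gam \<le> (T r ^\<^sub>m b)$$(j,q)" using Tpow_ge[OF r(1) ij(2) pq(2)] by auto
  have Ta: "T r ^\<^sub>m a \<in> carrier_mat n n" and Tb: "T r ^\<^sub>m b \<in> carrier_mat n n" using T_carrier by auto
  have nTa: "nn n (T r ^\<^sub>m a)" and nTb: "nn n (T r ^\<^sub>m b)" using nn_pow[OF T_carrier Tn] by auto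
  have NTb: "N r * T r ^\<^sub>m b \<in> carrier_mat n n" using NP(1) Tb by simp
  have nNTb: "nn n (N r * T r ^\<^sub>m b)" by (rule nn_mult[OF NP(1) Tb NP(4) nTb])
  have "gam * gam * (N r)$$(i,j) \<le> (T r ^\<^sub>m a)$$(p,i) * ((N r)$$(i,j) * (T r ^\<^sub>m b)$$(j,q))"
  proof -
    have g0: "0 \<le> gam" using gam(1) by simp
    have N0: "0 \<le> (N r)$$(i,j)" using NP(4) ij by (auto simp: nn_def)
    have "gam * ((N r)$$(i,j) * gam) \<le> (T r ^\<^sub>m a)$$(p,i) * ((N r)$$(i,j) * (T r ^\<^sub>m b)$$(j,q))"
      using a b g0 N0 by (intro mult_mono) (auto intro: mult_left_mono order_trans[OF g0])
    thus ?thesis by (simp add: algebra_simps)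
  qed
  also have "(N r)$$(i,j) * (T r ^\<^sub>m b)$$(j,q) \<le> (N r * T r ^\<^sub>m b)$$(i,q)"
    by (rule ent_ge[OF NP(1) Tb NP(4) nTb ij(1) pq(2) ij(2)])
  hence "(T r ^\<^sub>m a)$$(p,i) * ((N r)$$(i,j) * (T r ^\<^sub>m b)$$(j,q)) \<le> (T r ^\<^sub>m a)$$(p,i) * (N r * T r ^\<^sub>m b)$$(i,q)"
    using nTa pq ij by (intro mult_left_mono) (auto simp: nn_def)
  also have "\<dots> \<le> (T r ^\<^sub>m a * (N r * T r ^\<^sub>m b))$$(p,q)"
    by (rule ent_ge[OF Ta NTb nTa nNTb pq ij(1)])
  also have "\<dots> \<le> (T r ^\<^sub>m a * N r)$$(p,q)"
    using mle_mult_left[OF Ta NTb NP(1) nTa N_right[OF r, of b]] pq by (auto simp: mle_def)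
  also have "\<dots> \<le> (N r)$$(p,q)" using N_left[OF r, of a] pq by (auto simp: mle_def)
  finally show ?thesis .
qed

end



context setting begin

lemma diag_mult_ent: assumes X: "X \<in> carrier_mat n n" and pk: "p<n" "k<n"
  shows "(Lm * X)$$(p,k) = l p * X$$(p,k)"
proof -
  have Lc: "Lm \<in> carrier_mat n n" unfolding Lm mat_diag_def by simp
  have "(Lm * X)$$(p,k) = (\<Sum>j=0..<n. Lm$$(p,j) * X$$(j,k))" by (rule mult_ent[OF Lc X pk])
  also have "\<dots> = (\<Sum>j=0..<n. if j = p then l p * X$$(p,k) else 0)"
    using pk by (intro sum.cong) (auto simp: Lm mat_diag_def)
  also have "\<dots> = l p * X$$(p,k)" using pk by (simp add: sum.delta)
  finally show ?thesis .
qed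

lemma Lm_carrier: "Lm \<in> carrier_mat n n" unfolding Lm mat_diag_def by simp

lemma LXB_carrier: "X \<in> carrier_mat n n \<Longrightarrow> Lm * X * B \<in> carrier_mat n n"
  using Lm_carrier B by simp

lemma LXB_ent: assumes X: "X \<in> carrier_mat n n" and pq: "p<n" "q<n"
  shows "(Lm * X * B)$$(p,q) = l p * (\<Sum>k=0..<n. X$$(p,k) * B$$(k,q))"
proof -
  have LX: "Lm * X \<in> carrier_mat n n" using Lm_carrier X by simp
  have "(Lm * X * B)$$(p,q) = (\<Sum>k=0..<n. (Lm * X)$$(p,k) * B$$(k,q))" by (rule mult_ent[OF LX B pq])
  also have "\<dots> = (\<Sum>k=0..<n. l p * (X$$(p,k) * B$$(k,q)))"
    using pq by (intro sum.cong) (auto simp: diag_mult_ent[OF X])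
  finally show ?thesis by (simp add: sum_distrib_left)
qed

lemma LXB_le: assumes X: "X \<in> carrier_mat n n" and Y: "Y \<in> carrier_mat n n" and Z: "Z \<in> carrier_mat n n"
  and le: "\<forall>i<n. \<forall>j<n. X$$(i,j) \<le> Y$$(i,j) + a * Z$$(i,j)" and pq: "p<n" "q<n"
  shows "(Lm * X * B)$$(p,q) \<le> (Lm * Y * B)$$(p,q) + a * (Lm * Z * B)$$(p,q)"
proof -
  have "(\<Sum>k=0..<n. X$$(p,k) * B$$(k,q)) \<le> (\<Sum>k=0..<n. (Y$$(p,k) + a * Z$$(p,k)) * B$$(k,q))"
    using le pq nB by (intro sum_mono mult_right_mono) (auto simp: nn_def)
  also have "\<dots> = (\<Sum>k=0..<n. Y$$(p,k) * B$$(k,q)) + a * (\<Sum>k=0..<n. Z$$(p,k) * B$$(k,q))"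
    by (simp add: sum.distrib sum_distrib_left algebra_simps)
  finally have "l p * (\<Sum>k=0..<n. X$$(p,k) * B$$(k,q)) \<le> l p * ((\<Sum>k=0..<n. Y$$(p,k) * B$$(k,q)) + a * (\<Sum>k=0..<n. Z$$(p,k) * B$$(k,q)))"
    using l pq by (intro mult_left_mono) (auto simp: less_imp_le)
  thus ?thesis using LXB_ent[OF X pq] LXB_ent[OF Y pq] LXB_ent[OF Z pq] by (simp add: algebra_simps)
qed

lemma LXB_ge: assumes X: "X \<in> carrier_mat n n" and Y: "Y \<in> carrier_mat n n" and Z: "Z \<in> carrier_mat n n"
  and le: "\<forall>i<n. \<forall>j<n. Y$$(i,j) + a * Z$$(i,j) \<le> X$$(i,j)" and pq: "p<n" "q<n"
  shows "(Lm * Y * B)$$(p,q) + a * (Lm * Z * B)$$(p,q) \<le> (Lm * X * B)$$(p,q)"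
proof -
  have "(\<Sum>k=0..<n. Y$$(p,k) * B$$(k,q)) + a * (\<Sum>k=0..<n. Z$$(p,k) * B$$(k,q)) = (\<Sum>k=0..<n. (Y$$(p,k) + a * Z$$(p,k)) * B$$(k,q))"
    by (simp add: sum.distrib sum_distrib_left algebra_simps)
  also have "\<dots> \<le> (\<Sum>k=0..<n. X$$(p,k) * B$$(k,q))"
    using le pq nB by (intro sum_mono mult_right_mono) (auto simp: nn_def)
  finally have "l p * ((\<Sum>k=0..<n. Y$$(p,k) * B$$(k,q)) + a * (\<Sum>k=0..<n. Z$$(p,k) * B$$(k,q))) \<le> l p * (\<Sum>k=0..<n. X$$(p,k) * B$$(k,q))"
    using l pq by (intro mult_left_mono) (auto simp: less_imp_le)
  thus ?thesis using LXB_ent[OF X pq] LXB_ent[OF Y pq] LXB_ent[OF Z pq] by (simp add: algebra_simps)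
qed

lemma LXB_nn: assumes X: "X \<in> carrier_mat n n" "nn n X" shows "nn n (Lm * X * B)"
  unfolding nn_def
proof (intro allI impI)
  fix p q assume pq: "p<n" "q<n"
  have "0 \<le> (\<Sum>k=0..<n. X$$(p,k) * B$$(k,q))" using X nB pq by (intro sum_nonneg) (auto simp: nn_def)
  moreover have "0 < l p" using l pq by simp
  ultimately show "0 \<le> (Lm * X * B)$$(p,q)" using LXB_ent[OF X(1) pq] by simp
qed

lemma LXB_ge_one: assumes X: "X \<in> carrier_mat n n" "nn n X" and pq: "p<n" "q<n" "k<n"
  shows "l p * (X$$(p,k) * B$$(k,q)) \<le> (Lm * X * B)$$(p,q)"
proof -
  have "X$$(p,k) * B$$(k,q) \<le> (\<Sum>k=0..<n. X$$(p,k) * B$$(k,q))"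
    by (rule member_le_sum) (use X nB pq in \<open>auto simp: nn_def\<close>)
  thus ?thesis using LXB_ent[OF X(1) pq(1,2)] l pq by (simp add: less_imp_le)
qed

lemma LXB_pos: assumes X: "X \<in> carrier_mat n n" "mpos n X" shows "mpos n (Lm * X * B)"
  unfolding mpos_def
proof (intro allI impI)
  fix p q assume pq: "p<n" "q<n"
  obtain k where k: "k<n" "0 < B$$(k,q)" using Bcol pq by auto
  have nX: "nn n X" using X by (auto simp: nn_def mpos_def less_imp_le)
  have "0 < l p * (X$$(p,k) * B$$(k,q))" using l pq k X by (auto simp: mpos_def)
  also have "\<dots> \<le> (Lm * X * B)$$(p,q)" by (rule LXB_ge_one[OF X(1) nX pq k(1)])
  finally show "0 < (Lm * X * B)$$(p,q)" .
qed

lemma mv_le_comb: assumes A: "(A :: real mat) \<in> carrier_mat n n" and C: "C \<in> carrier_mat n n" and D: "D \<in> carrier_mat n n"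
  and v: "v \<in> carrier_vec n" "\<forall>i<n. 0 \<le> v$i"
  and le: "\<forall>i<n. \<forall>j<n. A$$(i,j) \<le> C$$(i,j) + a * D$$(i,j)" and i: "i<n"
  shows "(A *\<^sub>v v)$i \<le> (C *\<^sub>v v)$i + a * (D *\<^sub>v v)$i"
proof -
  have "(\<Sum>k=0..<n. A$$(i,k) * v$k) \<le> (\<Sum>k=0..<n. (C$$(i,k) + a * D$$(i,k)) * v$k)"
    using le v i by (intro sum_mono mult_right_mono) auto
  also have "\<dots> = (\<Sum>k=0..<n. C$$(i,k) * v$k) + a * (\<Sum>k=0..<n. D$$(i,k) * v$k)"
    by (simp add: sum.distrib sum_distrib_left algebra_simps)
  finally show ?thesis using mv_ent[OF A v(1) i] mv_ent[OF C v(1) i] mv_ent[OF D v(1) i] by simp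
qed

lemma mv_ge_comb: assumes A: "(A :: real mat) \<in> carrier_mat n n" and C: "C \<in> carrier_mat n n" and D: "D \<in> carrier_mat n n"
  and v: "v \<in> carrier_vec n" "\<forall>i<n. 0 \<le> v$i"
  and le: "\<forall>i<n. \<forall>j<n. C$$(i,j) + a * D$$(i,j) \<le> A$$(i,j)" and i: "i<n"
  shows "(C *\<^sub>v v)$i + a * (D *\<^sub>v v)$i \<le> (A *\<^sub>v v)$i"
proof -
  have "(\<Sum>k=0..<n. C$$(i,k) * v$k) + a * (\<Sum>k=0..<n. D$$(i,k) * v$k) = (\<Sum>k=0..<n. (C$$(i,k) + a * D$$(i,k)) * v$k)"
    by (simp add: sum.distrib sum_distrib_left algebra_simps)
  also have "\<dots> \<le> (\<Sum>k=0..<n. A$$(i,k) * v$k)"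
    using le v i by (intro sum_mono mult_right_mono) auto
  finally show ?thesis using mv_ent[OF A v(1) i] mv_ent[OF C v(1) i] mv_ent[OF D v(1) i] by simp
qed

lemma NKN_pos: assumes X: "X \<in> carrier_mat n n" "mpos n X" and Y: "Y \<in> carrier_mat n n" "mpos n Y"
  shows "mpos n (X * K * Y)" unfolding mpos_def
proof (intro allI impI)
  fix i j assume ij: "i<n" "j<n"
  obtain a b where ab: "a<n" "b<n" "0 < K$$(a,b)" using Kpos by auto
  have nX: "nn n X" and nY: "nn n Y" using X Y by (auto simp: nn_def mpos_def less_imp_le)
  have XK: "X * K \<in> carrier_mat n n" using X K by simp
  have nXK: "nn n (X * K)" by (rule nn_mult[OF X(1) K nX nK])
  have "0 < X$$(i,a) * K$$(a,b) * Y$$(b,j)" using X Y ab ij by (auto simp: mpos_def)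
  also have "\<dots> \<le> (X * K)$$(i,b) * Y$$(b,j)"
    using ent_ge[OF X(1) K nX nK ij(1) ab(2) ab(1)] Y ab ij by (intro mult_right_mono) (auto simp: mpos_def less_imp_le)
  also have "\<dots> \<le> (X * K * Y)$$(i,j)" by (rule ent_ge[OF XK Y(1) nXK nY ij(1) ij(2) ab(2)])
  finally show "0 < (X * K * Y)$$(i,j)" .
qed

lemma M_props: assumes r: "0 \<le> r" "r < rA"
  shows "M r \<in> carrier_mat n n" "nn n (M r)" "mpos n (M r)"
  unfolding M_eq using LXB_carrier[OF N_props(1)[OF r]] LXB_nn[OF N_props(1,4)[OF r]]
    LXB_pos[OF N_props(1)[OF r] N_pos[OF r]] by auto

lemma onep_pos: assumes X: "X \<in> carrier_mat n n" "mpos n X" shows "mpos n (1\<^sub>m n + X)"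
  using X by (auto simp: mpos_def add_ent[OF one_carrier_mat X(1)] add_pos_nonneg add_nonneg_pos)

lemma rho_nonneg: "X \<in> carrier_mat n n \<Longrightarrow> 0 \<le> rho X"
  using rho_eig[of X n] n norm_ge_zero by metis

lemma M_strict: assumes r: "0 \<le> r" and rs: "r < s" and s: "s < rA"
  shows "rho (M r) < rho (M s)"
proof -
  have r': "0 \<le> r" "r < rA" and s': "0 \<le> s" "s < rA" using r rs s by auto
  note Nr = N_props[OF r'] and Ns = N_props[OF s']
  note Mr = M_props[OF r'] and Ms = M_props[OF s']
  have NrK: "N r * K \<in> carrier_mat n n" and NsK: "N s * K \<in> carrier_mat n n" using Nr(1) Ns(1) K by auto
  have NKN: "N r * K * N r \<in> carrier_mat n n" using NrK Nr(1) by simp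
  have le1: "mle n (N r * K) (N s * K)" by (rule mle_mult_right[OF K Nr(1) Ns(1) nK N_mono[OF r _ s]]) (use rs in simp)
  have le2: "mle n (N r * K * N r) (N s * K * N r)" by (rule mle_mult_right[OF Nr(1) NrK NsK Nr(4) le1])
  have ent: "\<forall>i<n. \<forall>j<n. (N r)$$(i,j) + (s - r) * (N r * K * N r)$$(i,j) \<le> (N s)$$(i,j)"
  proof (intro allI impI)
    fix i j assume ij: "i<n" "j<n"
    have "(s - r) * (N r * K * N r)$$(i,j) \<le> (s - r) * (N s * K * N r)$$(i,j)"
      using le2 ij rs by (intro mult_left_mono) (auto simp: mle_def)
    thus "(N r)$$(i,j) + (s - r) * (N r * K * N r)$$(i,j) \<le> (N s)$$(i,j)" using resolvent[OF r' s' ij] by simp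
  qed
  define E where "E = Lm * (N r * K * N r) * B"
  have Ec: "E \<in> carrier_mat n n" unfolding E_def using LXB_carrier[OF NKN] .
  have Ep: "mpos n E" unfolding E_def by (rule LXB_pos[OF NKN NKN_pos[OF Nr(1) N_pos[OF r'] Nr(1) N_pos[OF r']]])
  have Ment: "\<forall>i<n. \<forall>j<n. (M r)$$(i,j) + (s - r) * E$$(i,j) \<le> (M s)$$(i,j)"
    unfolding M_eq E_def using LXB_ge[OF Ns(1) Nr(1) NKN ent] by blast
  obtain v where v: "v \<in> carrier_vec n" "\<forall>i<n. 0 \<le> v$i" "\<exists>i<n. 0 < v$i"
    "\<forall>i<n. rho (M r) * v$i \<le> (M r *\<^sub>v v)$i" using EIG[OF Mr(1) n Mr(2)] by blast
  define g where "g = vec n (\<lambda>i. (s - r) * (E *\<^sub>v v)$i)"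
  have gc: "g \<in> carrier_vec n" unfolding g_def by simp
  have Ev: "\<forall>i<n. 0 < (E *\<^sub>v v)$i" using mv_pos[OF Ec v(1) Ep v(2)] v(3) by blast
  have g0: "\<forall>i<n. 0 \<le> g$i" using Ev rs unfolding g_def by (auto intro: less_imp_le)
  have gp: "\<exists>k<n. 0 < g$k" using Ev rs n unfolding g_def by auto
  have P: "1\<^sub>m n + M s \<in> carrier_mat n n" using Ms(1) by simp
  show ?thesis
  proof (rule strict_incr[OF Ms(1) P n Ms(2) onep_pos[OF Ms(1,3)] comm_one_plus[OF Ms(1)] v(1,2,3) gc g0 gp])
    show "0 \<le> rho (M r)" by (rule rho_nonneg[OF Mr(1)])
    show "\<forall>i<n. rho (M r) * v$i + g$i \<le> (M s *\<^sub>v v)$i"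
    proof (intro allI impI)
      fix i assume i: "i<n"
      have "(M r *\<^sub>v v)$i + (s - r) * (E *\<^sub>v v)$i \<le> (M s *\<^sub>v v)$i"
        by (rule mv_ge_comb[OF Ms(1) Mr(1) Ec v(1,2) Ment i])
      thus "rho (M r) * v$i + g$i \<le> (M s *\<^sub>v v)$i" using v(4) i unfolding g_def by force
    qed
  qed
qed

lemma no_w: assumes r: "0 \<le> r" "r < rA" and gt: "1 < rho (M r)"
  shows "\<not> (\<exists>w :: real vec. dim_vec w = n \<and> (\<forall>j<n. w $ j > 0)
            \<and> (\<forall>j<n. (transpose_mat (1\<^sub>m n - M r) *\<^sub>v w) $ j \<ge> 0))"
proof
  assume "\<exists>w :: real vec. dim_vec w = n \<and> (\<forall>j<n. w $ j > 0)
            \<and> (\<forall>j<n. (transpose_mat (1\<^sub>m n - M r) *\<^sub>v w) $ j \<ge> 0)"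
  then obtain w :: "real vec" where w: "dim_vec w = n" "\<forall>j<n. w $ j > 0"
    "\<forall>j<n. (transpose_mat (1\<^sub>m n - M r) *\<^sub>v w) $ j \<ge> 0" by blast
  note Mr = M_props[OF r]
  have wc: "w \<in> carrier_vec n" using w(1) unfolding carrier_vec_def by simp
  have Mt: "transpose_mat (M r) \<in> carrier_mat n n" using Mr(1) by simp
  have tr: "transpose_mat (1\<^sub>m n - M r) = 1\<^sub>m n - transpose_mat (M r)"
    by (rule eq_matI) (use Mr(1) in auto)
  have e: "(1\<^sub>m n - transpose_mat (M r)) *\<^sub>v w = w - transpose_mat (M r) *\<^sub>v w"
    using minus_mult_distrib_mat_vec[OF one_carrier_mat Mt wc] wc by simp
  have nMt: "nn n (transpose_mat (M r))" using Mr(1,2) by (auto simp: nn_def)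
  have "rho (transpose_mat (M r)) \<le> 1"
  proof (rule T1[OF Mt n nMt wc w(2)])
    show "\<forall>i<n. (transpose_mat (M r) *\<^sub>v w)$i \<le> 1 * w$i"
    proof (intro allI impI)
      fix i assume i: "i<n"
      have "0 \<le> (w - transpose_mat (M r) *\<^sub>v w)$i" using w(3) i unfolding tr e by auto
      thus "(transpose_mat (M r) *\<^sub>v w)$i \<le> 1 * w$i" using i wc Mt by simp
    qed
  qed
  thus False using rho_transpose[OF Mr(1)] gt by simp
qed

end



context setting begin

lemma NKN_carrier: assumes r: "0 \<le> r" "r < rA" and s: "0 \<le> s" "s < rA"
  shows "N s * K * N r \<in> carrier_mat n n"
  using N_props(1)[OF r] N_props(1)[OF s] K by simp

lemma NKN_mono: assumes r: "0 \<le> r" "r \<le> t" "t < rA" and s: "0 \<le> s" "s < rA"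
  shows "mle n (N r * K * N s) (N t * K * N s)"
proof -
  have r': "0 \<le> r" "r < rA" and t': "0 \<le> t" "t < rA" using r by auto
  have le1: "mle n (N r * K) (N t * K)" by (rule mle_mult_right[OF K N_props(1)[OF r'] N_props(1)[OF t'] nK N_mono[OF r]])
  show ?thesis by (rule mle_mult_right[OF N_props(1)[OF s] _ _ N_props(4)[OF s] le1])
    (use N_props(1)[OF r'] N_props(1)[OF t'] K in auto)
qed

lemma open_up: assumes s: "0 \<le> s" "s < rA" and lt: "rho (M s) < 1"
  shows "\<exists>r. s < r \<and> r < rA \<and> rho (M r) < 1"
proof -
  note Ms = M_props[OF s]
  obtain Y where Y: "Y \<in> carrier_mat n n" "(1\<^sub>m n - M s) * Y = 1\<^sub>m n" "nn n Y" "mle n (1\<^sub>m n) Y"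
    using NEU[OF Ms(1) n Ms(2) lt] by blast
  define e where "e = vec n (\<lambda>_. 1::real)"
  have ec: "e \<in> carrier_vec n" unfolding e_def by simp
  define v where "v = Y *\<^sub>v e"
  have vc: "v \<in> carrier_vec n" unfolding v_def using mult_mat_vec_carrier[OF Y(1) ec] .
  have v1: "1 \<le> v$i" if i: "i<n" for i
  proof -
    have "Y$$(i,i) * e$i \<le> (Y *\<^sub>v e)$i" by (rule mv_ge[OF Y(1) ec Y(3) _ i i]) (auto simp: e_def)
    moreover have "(1\<^sub>m n)$$(i,i) \<le> Y$$(i,i)" using Y(4) i unfolding mle_def by blast
    hence "1 \<le> Y$$(i,i)" using i by simp
    ultimately show ?thesis using i unfolding v_def e_def by simp
  qed
  have v0: "\<forall>i<n. 0 \<le> v$i" using v1 by (meson order_trans zero_le_one)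
  have R: "1\<^sub>m n - M s \<in> carrier_mat n n" using minus_carrier_mat[OF Ms(1)] .
  have "(1\<^sub>m n - M s) *\<^sub>v v = ((1\<^sub>m n - M s) * Y) *\<^sub>v e" unfolding v_def using assoc_mult_mat_vec[OF R Y(1) ec] by simp
  also have "\<dots> = e" using Y(2) ec by simp
  finally have Rv: "(1\<^sub>m n - M s) *\<^sub>v v = e" .
  have Msv: "(M s *\<^sub>v v)$i = v$i - 1" if i: "i<n" for i
  proof -
    have "(1\<^sub>m n - M s) *\<^sub>v v = v - M s *\<^sub>v v" using minus_mult_distrib_mat_vec[OF one_carrier_mat Ms(1) vc] vc by simp
    with Rv have "(v - M s *\<^sub>v v)$i = e$i" by simp
    thus ?thesis using i vc Ms(1) unfolding e_def by simp
  qed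
  define t where "t = (s + rA)/2"
  have t: "s < t" "t < rA" "0 \<le> t" using s unfolding t_def by auto
  define F where "F = Lm * (N t * K * N s) * B"
  have NKNc: "N t * K * N s \<in> carrier_mat n n" using NKN_carrier[OF s t(3) t(2)] .
  have Fc: "F \<in> carrier_mat n n" unfolding F_def by (rule LXB_carrier[OF NKNc])
  have Fn: "nn n F" unfolding F_def by (rule LXB_nn[OF NKNc NKN_nn[OF s t(3) t(2)]])
  define Phi where "Phi = (\<Sum>i=0..<n. (F *\<^sub>v v)$i) + 1"
  have Fv0: "0 \<le> (F *\<^sub>v v)$i" if "i<n" for i using mv_nn[OF Fc vc Fn v0 that] .
  have FvP: "(F *\<^sub>v v)$i \<le> Phi" if "i<n" for i
  proof -
    have "(F *\<^sub>v v)$i \<le> (\<Sum>i=0..<n. (F *\<^sub>v v)$i)" by (rule member_le_sum) (use Fv0 that in auto)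
    thus ?thesis unfolding Phi_def by simp
  qed
  have Phi: "0 < Phi" unfolding Phi_def using Fv0 by (smt (verit) atLeastLessThan_iff sum_nonneg)
  define V where "V = (\<Sum>i=0..<n. v$i)"
  have vV: "v$i \<le> V" if "i<n" for i unfolding V_def by (rule member_le_sum) (use v0 that in auto)
  have V1: "1 \<le> V" using vV[OF n] v1[OF n] by simp
  define r where "r = s + min (t - s) (1/(2*Phi))"
  have r: "s < r" "r \<le> t" using t Phi unfolding r_def by auto
  have r': "0 \<le> r" "r < rA" using r t s by auto
  have rs: "r - s \<le> 1/(2*Phi)" unfolding r_def by simp
  have NKNr: "N r * K * N s \<in> carrier_mat n n" using NKN_carrier[OF s r'] .
  have Nle: "\<forall>i<n. \<forall>j<n. (N r)$$(i,j) \<le> (N s)$$(i,j) + (r - s) * (N t * K * N s)$$(i,j)"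
  proof (intro allI impI)
    fix i j assume ij: "i<n" "j<n"
    have "(r - s) * (N r * K * N s)$$(i,j) \<le> (r - s) * (N t * K * N s)$$(i,j)"
      using NKN_mono[OF r'(1) r(2) t(2) s] ij r by (intro mult_left_mono) (auto simp: mle_def)
    thus "(N r)$$(i,j) \<le> (N s)$$(i,j) + (r - s) * (N t * K * N s)$$(i,j)" using resolvent[OF s r' ij] by simp
  qed
  have Mle: "\<forall>i<n. \<forall>j<n. (M r)$$(i,j) \<le> (M s)$$(i,j) + (r - s) * F$$(i,j)"
    unfolding M_eq F_def using LXB_le[OF N_props(1)[OF r'] N_props(1)[OF s] NKNc Nle] by blast
  have "rho (M r) \<le> 1 - 1/(2*V)"
  proof (rule T1[OF M_props(1)[OF r'] n M_props(2)[OF r'] vc])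
    show "\<forall>i<n. 0 < v$i"
    proof (intro allI impI)
      fix i assume "i<n" from v1[OF this] show "0 < v$i" by simp
    qed
    show "\<forall>i<n. (M r *\<^sub>v v)$i \<le> (1 - 1/(2*V)) * v$i"
    proof (intro allI impI)
      fix i assume i: "i<n"
      have a: "(M r *\<^sub>v v)$i \<le> (M s *\<^sub>v v)$i + (r - s) * (F *\<^sub>v v)$i"
        by (rule mv_le_comb[OF M_props(1)[OF r'] Ms(1) Fc vc v0 Mle i])
      have "(r - s) * (F *\<^sub>v v)$i \<le> (1/(2*Phi)) * Phi"
        using rs FvP[OF i] Fv0[OF i] r by (intro mult_mono) auto
      also have "\<dots> = 1/2" using Phi by simp
      finally have b: "(r - s) * (F *\<^sub>v v)$i \<le> 1/2" .
      have "v$i / (2*V) \<le> 1/2" using vV[OF i] V1 by (simp add: divide_le_eq)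
      hence c: "v$i - 1/2 \<le> (1 - 1/(2*V)) * v$i" by (simp add: algebra_simps)
      show "(M r *\<^sub>v v)$i \<le> (1 - 1/(2*V)) * v$i" using a b c Msv[OF i] by linarith
    qed
  qed
  also have "\<dots> < 1" using V1 by simp
  finally show ?thesis using r r' by blast
qed

lemma open_down: assumes s: "0 < s" "s < rA" and gt: "1 < rho (M s)"
  shows "\<exists>r. 0 \<le> r \<and> r < s \<and> 1 < rho (M r)"
proof -
  have s': "0 \<le> s" "s < rA" using s by auto
  note Ms = M_props[OF s']
  obtain v where v: "v \<in> carrier_vec n" "\<forall>i<n. 0 \<le> v$i" "\<exists>i<n. 0 < v$i"
    "\<forall>i<n. rho (M s) * v$i \<le> (M s *\<^sub>v v)$i" using EIG[OF Ms(1) n Ms(2)] by blast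
  have P: "1\<^sub>m n + M s \<in> carrier_mat n n" using Ms(1) by simp
  obtain w where w: "w \<in> carrier_vec n" "\<forall>i<n. 0 < w$i" "\<forall>i<n. rho (M s) * w$i \<le> (M s *\<^sub>v w)$i"
    using make_pos[OF Ms(1) P onep_pos[OF Ms(1,3)] comm_one_plus[OF Ms(1)] v] by blast
  have w0: "\<forall>i<n. 0 \<le> w$i" using w(2) less_imp_le by blast
  obtain wm where wm: "0 < wm" "\<forall>i<n. wm \<le> w$i" using pos_lb[of n "\<lambda>i. w$i"] w(2) by blast
  have NKNc: "N s * K * N s \<in> carrier_mat n n" using NKN_carrier[OF s' s'] .
  define E where "E = Lm * (N s * K * N s) * B"
  have Ec: "E \<in> carrier_mat n n" unfolding E_def by (rule LXB_carrier[OF NKNc])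
  have En: "nn n E" unfolding E_def by (rule LXB_nn[OF NKNc NKN_nn[OF s' s']])
  define Phi where "Phi = (\<Sum>i=0..<n. (E *\<^sub>v w)$i) + 1"
  have Ew0: "0 \<le> (E *\<^sub>v w)$i" if "i<n" for i using mv_nn[OF Ec w(1) En w0 that] .
  have EwP: "(E *\<^sub>v w)$i \<le> Phi" if "i<n" for i
  proof -
    have "(E *\<^sub>v w)$i \<le> (\<Sum>i=0..<n. (E *\<^sub>v w)$i)" by (rule member_le_sum) (use Ew0 that in auto)
    thus ?thesis unfolding Phi_def by simp
  qed
  have Phi: "0 < Phi" unfolding Phi_def using Ew0 by (smt (verit) atLeastLessThan_iff sum_nonneg)
  define rs where "rs = rho (M s)"
  define eta where "eta = min (s/2) ((rs - 1) * wm / (2 * Phi))"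
  have eta: "0 < eta" "eta \<le> s/2" "eta \<le> (rs - 1) * wm / (2 * Phi)"
    using s Phi wm gt unfolding eta_def rs_def by auto
  define r where "r = s - eta"
  have r: "0 \<le> r" "r < s" "r < rA" using eta s unfolding r_def by auto
  have NKNr: "N r * K * N s \<in> carrier_mat n n" using NKN_carrier[OF s' r(1) r(3)] .
  have Nge: "\<forall>i<n. \<forall>j<n. (N s)$$(i,j) + (r - s) * (N s * K * N s)$$(i,j) \<le> (N r)$$(i,j)"
  proof (intro allI impI)
    fix i j assume ij: "i<n" "j<n"
    have "(r - s) * (N s * K * N s)$$(i,j) \<le> (r - s) * (N r * K * N s)$$(i,j)"
      using NKN_mono[OF r(1) less_imp_le[OF r(2)] s(2) s'] ij r by (intro mult_left_mono_neg) (auto simp: mle_def)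
    thus "(N s)$$(i,j) + (r - s) * (N s * K * N s)$$(i,j) \<le> (N r)$$(i,j)"
      using resolvent[OF s' r(1) r(3) ij] by simp
  qed
  have Mge: "\<forall>i<n. \<forall>j<n. (M s)$$(i,j) + (r - s) * E$$(i,j) \<le> (M r)$$(i,j)"
    unfolding M_eq E_def using LXB_ge[OF N_props(1)[OF r(1) r(3)] N_props(1)[OF s'] NKNc Nge] by blast
  have "(rs + 1)/2 \<le> rho (M r)"
  proof (rule T3[OF M_props(1)[OF r(1) r(3)] n M_props(2)[OF r(1) r(3)] _ w(1) w0])
    show "0 < (rs + 1)/2" using gt unfolding rs_def by simp
    show "\<exists>i<n. 0 < w$i" using w(2) n by blast
    show "\<forall>i<n. (rs + 1)/2 * w$i \<le> (M r *\<^sub>v w)$i"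
    proof (intro allI impI)
      fix i assume i: "i<n"
      have a: "(M s *\<^sub>v w)$i + (r - s) * (E *\<^sub>v w)$i \<le> (M r *\<^sub>v w)$i"
        by (rule mv_ge_comb[OF M_props(1)[OF r(1) r(3)] Ms(1) Ec w(1) w0 Mge i])
      have "eta * (E *\<^sub>v w)$i \<le> ((rs - 1) * wm / (2 * Phi)) * Phi"
        using eta EwP[OF i] Ew0[OF i] by (intro mult_mono) auto
      also have "\<dots> = (rs - 1) * wm / 2" using Phi by simp
      also have "\<dots> \<le> (rs - 1) * w$i / 2" using wm i gt unfolding rs_def by (intro divide_right_mono mult_left_mono) auto
      finally have b: "eta * (E *\<^sub>v w)$i \<le> (rs - 1) * w$i / 2" .
      have "r - s = - eta" unfolding r_def by simp
      hence "(M s *\<^sub>v w)$i - eta * (E *\<^sub>v w)$i \<le> (M r *\<^sub>v w)$i" using a by simp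
      moreover have "rs * w$i \<le> (M s *\<^sub>v w)$i" using w(3) i unfolding rs_def by blast
      ultimately show "(rs + 1)/2 * w$i \<le> (M r *\<^sub>v w)$i" using b by (simp add: field_simps)
    qed
  qed
  moreover have "1 < (rs + 1)/2" using gt unfolding rs_def by simp
  ultimately show ?thesis using r by (intro exI[of _ r]) auto
qed

end



context setting begin

lemma blow_up: "\<exists>r. 0 \<le> r \<and> r < rA \<and> 1 < rho (M r)"
proof -
  have rA0: "0 \<le> rA" using rA by simp
  have TA: "T rA \<in> carrier_mat n n" by (rule T_carrier)
  have rTA: "rho (T rA) = 1" using rhoA unfolding T_def .
  obtain v where v: "v \<in> carrier_vec n" "\<forall>i<n. 0 \<le> v$i" "\<exists>i<n. 0 < v$i"
    "\<forall>i<n. rho (T rA) * v$i \<le> (T rA *\<^sub>v v)$i" using EIG[OF TA n T_nn[OF rA0]] by blast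
  have v1: "\<forall>i<n. 1 * v$i \<le> (T rA *\<^sub>v v)$i" using v(4) rTA by simp
  obtain u where u: "u \<in> carrier_vec n" "\<forall>i<n. 0 < u$i" "\<forall>i<n. 1 * u$i \<le> (T rA *\<^sub>v u)$i"
    using make_pos[OF TA Pm_carrier[OF TA] Pm_pos[OF TA T_ge[OF rA0]] Pm_comm[OF TA] v(1,2,3) v1] by blast
  have u0: "\<forall>i<n. 0 \<le> u$i" using u(2) less_imp_le by blast
  have Ku0: "0 \<le> (K *\<^sub>v u)$j" if "j<n" for j using mv_nn[OF K u(1) nK u0 that] .
  define kap where "kap = (\<Sum>j=0..<n. (K *\<^sub>v u)$j)"
  have kap: "0 < kap"
  proof -
    obtain k where k: "k<n" "0 < (K *\<^sub>v u)$k" using K_u_pos[OF u(1,2)] by auto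
    have "(K *\<^sub>v u)$k \<le> kap" unfolding kap_def by (rule member_le_sum) (use Ku0 k in auto)
    thus ?thesis using k by simp
  qed
  obtain kq where kq: "\<forall>q<n. kq q < n \<and> 0 < B$$(kq q, q)" using Bcol by metis
  obtain lam0 where lam0: "0 < lam0" "\<forall>p<n. \<forall>q<n. lam0 \<le> l p * B$$(kq q, q)"
    using pos_lb2[of n "\<lambda>p q. l p * B$$(kq q, q)"] kq l by (metis mult_pos_pos)
  define C1 where "C1 = lam0 * (gam * gam * u$0)"
  have C1: "0 < C1" unfolding C1_def using lam0 gam(1) u(2) n by simp
  have key: "C1 \<le> (M r)$$(p,q) * ((rA - r) * kap)" if r: "0 \<le> r" "r < rA" and pq: "p<n" "q<n" for r p q
  proof -
    note NP = N_props[OF r]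
    have Rr: "1\<^sub>m n - T r \<in> carrier_mat n n" using minus_carrier_mat[OF T_carrier] .
    define w where "w = (1\<^sub>m n - T r) *\<^sub>v u"
    have wc: "w \<in> carrier_vec n" unfolding w_def using mult_mat_vec_carrier[OF Rr u(1)] .
    have wle: "w$j \<le> (rA - r) * (K *\<^sub>v u)$j" if j: "j<n" for j
    proof -
      have "w = u - T r *\<^sub>v u" unfolding w_def using minus_mult_distrib_mat_vec[OF one_carrier_mat T_carrier u(1)] u(1) by simp
      hence "w$j = u$j - (T r *\<^sub>v u)$j" using j u(1) T_carrier[of r] by simp
      moreover have "(T rA *\<^sub>v u)$j = (T r *\<^sub>v u)$j + (rA - r) * (K *\<^sub>v u)$j" by (rule T_mv[OF u(1) j])
      moreover have "1 * u$j \<le> (T rA *\<^sub>v u)$j" using u(3) j by blast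
      ultimately show ?thesis by simp
    qed
    have "N r *\<^sub>v w = (N r * (1\<^sub>m n - T r)) *\<^sub>v u" unfolding w_def using assoc_mult_mat_vec[OF NP(1) Rr u(1)] by simp
    also have "\<dots> = u" using NP(3) u(1) by simp
    finally have uNw: "u = N r *\<^sub>v w" by simp
    have "gam * gam * u$0 = gam * gam * (\<Sum>j=0..<n. (N r)$$(0,j) * w$j)"
      using uNw mv_ent[OF NP(1) wc n] by simp
    also have "\<dots> = (\<Sum>j=0..<n. (gam * gam * (N r)$$(0,j)) * w$j)" by (simp add: sum_distrib_left algebra_simps)
    also have "\<dots> \<le> (\<Sum>j=0..<n. (gam * gam * (N r)$$(0,j)) * ((rA - r) * (K *\<^sub>v u)$j))"
    proof (rule sum_mono)
      fix j assume j: "j \<in> {0..<n}"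
      have "0 \<le> gam * gam * (N r)$$(0,j)" using gam(1) NP(4) j n by (auto simp: nn_def)
      thus "(gam * gam * (N r)$$(0,j)) * w$j \<le> (gam * gam * (N r)$$(0,j)) * ((rA - r) * (K *\<^sub>v u)$j)"
        using wle j by (intro mult_left_mono) auto
    qed
    also have "\<dots> \<le> (\<Sum>j=0..<n. (N r)$$(p, kq q) * ((rA - r) * (K *\<^sub>v u)$j))"
    proof (rule sum_mono)
      fix j assume j: "j \<in> {0..<n}"
      have "gam * gam * (N r)$$(0,j) \<le> (N r)$$(p, kq q)" using N_comp[OF r pq(1) _ n] kq pq j by auto
      thus "(gam * gam * (N r)$$(0,j)) * ((rA - r) * (K *\<^sub>v u)$j) \<le> (N r)$$(p, kq q) * ((rA - r) * (K *\<^sub>v u)$j)"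
        using Ku0 j r by (intro mult_right_mono) auto
    qed
    also have "\<dots> = (N r)$$(p, kq q) * ((rA - r) * kap)" unfolding kap_def by (simp add: sum_distrib_left)
    finally have a: "gam * gam * u$0 \<le> (N r)$$(p, kq q) * ((rA - r) * kap)" .
    have b: "lam0 * (N r)$$(p, kq q) \<le> (M r)$$(p,q)"
    proof -
      have "lam0 * (N r)$$(p, kq q) \<le> (l p * B$$(kq q, q)) * (N r)$$(p, kq q)"
        using lam0 pq NP(4) kq by (intro mult_right_mono) (auto simp: nn_def)
      also have "\<dots> = l p * ((N r)$$(p, kq q) * B$$(kq q, q))" by simp
      also have "\<dots> \<le> (M r)$$(p,q)" unfolding M_eq using LXB_ge_one[OF NP(1) NP(4) pq] kq pq by blast
      finally show ?thesis .
    qed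
    have rk: "0 \<le> (rA - r) * kap" using r kap by simp
    have "C1 \<le> lam0 * ((N r)$$(p, kq q) * ((rA - r) * kap))" unfolding C1_def
      using a lam0 by (intro mult_left_mono) auto
    also have "\<dots> = (lam0 * (N r)$$(p, kq q)) * ((rA - r) * kap)" by simp
    also have "\<dots> \<le> (M r)$$(p,q) * ((rA - r) * kap)" using b rk by (intro mult_right_mono) auto
    finally show ?thesis .
  qed
  define r where "r = max 0 (rA - C1 / (2 * kap))"
  have r: "0 \<le> r" "r < rA" unfolding r_def using rA C1 kap by auto
  have rk: "(rA - r) * kap \<le> C1 / 2" unfolding r_def using kap rA C1
    by (cases "0 \<le> rA - C1 / (2 * kap)") (auto simp: field_simps)
  have rk0: "0 < (rA - r) * kap" using r kap by simp
  note Mr = M_props[OF r]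
  define e where "e = vec n (\<lambda>_. 1::real)"
  have ec: "e \<in> carrier_vec n" unfolding e_def by simp
  have "2 \<le> rho (M r)"
  proof (rule T3[OF Mr(1) n Mr(2) _ ec])
    show "\<forall>i<n. 0 \<le> e$i" "\<exists>i<n. 0 < e$i" using n unfolding e_def by auto
    show "\<forall>i<n. 2 * e$i \<le> (M r *\<^sub>v e)$i"
    proof (intro allI impI)
      fix i assume i: "i<n"
      have "(M r)$$(i,i) * e$i \<le> (M r *\<^sub>v e)$i" by (rule mv_ge[OF Mr(1) ec Mr(2) _ i i]) (auto simp: e_def)
      hence x: "(M r)$$(i,i) \<le> (M r *\<^sub>v e)$i" using i unfolding e_def by simp
      have "2 \<le> (M r)$$(i,i)"
      proof (rule ccontr)
        assume "\<not> ?thesis"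
        hence "(M r)$$(i,i) * ((rA - r) * kap) < 2 * ((rA - r) * kap)" using rk0 by (intro mult_strict_right_mono) auto
        also have "\<dots> \<le> C1" using rk by simp
        finally show False using key[OF r i i] by simp
      qed
      thus "2 * e$i \<le> (M r *\<^sub>v e)$i" using x i unfolding e_def by simp
    qed
  qed simp
  thus ?thesis using r by (intro exI[of _ r]) auto
qed

lemma M_le: assumes "0 \<le> r" "r \<le> s" "s < rA" shows "rho (M r) \<le> rho (M s)"
  using M_strict[of r s] assms by (cases "r = s") auto

lemma main_loc: assumes M0: "rho (M 0) < 1"
  shows "\<exists>rs. 0 < rs \<and> rs < rA \<and> rho (M rs) = 1
           \<and> (\<forall>r. 0 < r \<and> r < rA \<and> rho (M r) = 1 \<longrightarrow> r = rs)
           \<and> (\<forall>r. 0 \<le> r \<and> r < rs \<longrightarrow> rho (M r) < 1)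
           \<and> (\<forall>r. rs < r \<and> r < rA \<longrightarrow> rho (M r) > 1
                \<and> \<not> (\<exists>w :: real vec. dim_vec w = n \<and> (\<forall>j<n. w $ j > 0)
                       \<and> (\<forall>j<n. (transpose_mat (1\<^sub>m n - M r) *\<^sub>v w) $ j \<ge> 0)))"
proof -
  define S where "S = {r. 0 \<le> r \<and> r < rA \<and> rho (M r) < 1}"
  obtain r1 where r1: "0 \<le> r1" "r1 < rA" "1 < rho (M r1)" using blow_up by blast
  have S_le: "x < r1" if "x \<in> S" for x
  proof (rule ccontr)
    assume "\<not> x < r1"
    hence "rho (M r1) \<le> rho (M x)" using that r1 unfolding S_def by (intro M_le) auto
    thus False using that r1 unfolding S_def by auto
  qed
  have S0: "0 \<in> S" unfolding S_def using rA M0 by auto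
  have Sne: "S \<noteq> {}" using S0 by auto
  have bdd: "bdd_above S" using S_le by (meson bdd_aboveI less_imp_le)
  define rs where "rs = Sup S"
  have rs_r1: "rs \<le> r1" unfolding rs_def using S_le Sne by (meson cSup_least less_imp_le)
  have up: "x \<le> rs" if "x \<in> S" for x unfolding rs_def using cSup_upper[OF that bdd] .
  have rsA: "rs < rA" using rs_r1 r1 by simp
  obtain r0 where r0: "0 < r0" "r0 < rA" "rho (M r0) < 1" using open_up[of 0] rA M0 by auto
  have "r0 \<in> S" unfolding S_def using r0 by auto
  hence rs0: "0 < rs" using up r0 by fastforce
  have eq1: "rho (M rs) = 1"
  proof (rule ccontr)
    assume ne: "rho (M rs) \<noteq> 1"
    show False
    proof (cases "rho (M rs) < 1")
      case True
      obtain r where r: "rs < r" "r < rA" "rho (M r) < 1" using open_up[OF _ rsA True] rs0 by auto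
      hence "r \<in> S" unfolding S_def using rs0 by auto
      with up r show False by fastforce
    next
      case False
      hence gt: "1 < rho (M rs)" using ne by simp
      obtain r where r: "0 \<le> r" "r < rs" "1 < rho (M r)" using open_down[OF rs0 rsA gt] by auto
      have "r < Sup S" using r unfolding rs_def by simp
      then obtain x where x: "x \<in> S" "r < x" using less_cSup_iff[OF Sne bdd] by auto
      have "rho (M r) < rho (M x)" using M_strict[OF r(1) x(2)] x unfolding S_def by auto
      thus False using x r unfolding S_def by auto
    qed
  qed
  have below: "rho (M r) < 1" if "0 \<le> r" "r < rs" for r using M_strict[OF that(1) that(2)] rsA eq1 by simp
  have above: "1 < rho (M r)" if "rs < r" "r < rA" for r using M_strict[of rs r] rs0 that eq1 by simp
  show ?thesis
  proof (intro exI[of _ rs] conjI allI impI)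
    show "0 < rs" "rs < rA" "rho (M rs) = 1" using rs0 rsA eq1 by auto
    fix r
    { assume a: "0 < r \<and> r < rA \<and> rho (M r) = 1"
      show "r = rs"
      proof (rule ccontr)
        assume "r \<noteq> rs"
        hence "r < rs \<or> rs < r" by auto
        thus False
        proof
          assume "r < rs" thus False using below[of r] a by auto
        next
          assume "rs < r" thus False using above[of r] a by auto
        qed
      qed }
    { assume a: "0 \<le> r \<and> r < rs" thus "rho (M r) < 1" using below by auto }
    { assume a: "rs < r \<and> r < rA"
      thus "1 < rho (M r)" using above by auto
      show "\<not> (\<exists>w :: real vec. dim_vec w = n \<and> (\<forall>j<n. w $ j > 0)
                       \<and> (\<forall>j<n. (transpose_mat (1\<^sub>m n - M r) *\<^sub>v w) $ j \<ge> 0))"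
        using no_w[of r] a above rs0 by auto }
  qed
qed

end



lemma nonneg_nn: "X \<in> carrier_mat n n \<Longrightarrow> nonneg_mat X \<Longrightarrow> nn n X"
  unfolding nonneg_mat_def nn_def by auto

theorem mainTheorem9:
  fixes n :: nat and A K B :: "real mat" and \<delta> l :: "nat \<Rightarrow> real" and rA :: real
  assumes n2: "n \<ge> 2"
    and A: "A \<in> carrier_mat n n" and K: "K \<in> carrier_mat n n" and B: "B \<in> carrier_mat n n"
    and A_nn: "nonneg_mat A" and K_nn: "nonneg_mat K" and B_nn: "nonneg_mat B"
    and K_nz: "K \<noteq> 0\<^sub>m n n"
    and \<delta>: "\<forall>j<n. 0 < \<delta> j \<and> \<delta> j \<le> 1"
    and l: "\<forall>j<n. 0 < l j"
    and B_col: "\<forall>j<n. \<exists>i<n. B $$ (i, j) \<noteq> 0"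
    and irr: "irreducible_mat (A + K * mat_diag n \<delta>)"
    and rho_lt: "rho (A + K * mat_diag n \<delta>) < 1"
    and rA_pos: "0 < rA"
    and rA_def: "rho (A + K * mat_diag n \<delta> + rA \<cdot>\<^sub>m K) = 1"
    and M0: "rho (Mmat n (mat_diag n l) (A + K * mat_diag n \<delta>) K B 0) < 1"
  shows "\<exists>rs. 0 < rs \<and> rs < rA
           \<and> rho (Mmat n (mat_diag n l) (A + K * mat_diag n \<delta>) K B rs) = 1
           \<and> (\<forall>r. 0 < r \<and> r < rA \<and> rho (Mmat n (mat_diag n l) (A + K * mat_diag n \<delta>) K B r) = 1
                  \<longrightarrow> r = rs)
           \<and> (\<forall>r. 0 \<le> r \<and> r < rs \<longrightarrow> rho (Mmat n (mat_diag n l) (A + K * mat_diag n \<delta>) K B r) < 1)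
           \<and> (\<forall>r. rs < r \<and> r < rA \<longrightarrow>
                  rho (Mmat n (mat_diag n l) (A + K * mat_diag n \<delta>) K B r) > 1
                \<and> \<not> (\<exists>w :: real vec. dim_vec w = n \<and> (\<forall>j<n. w $ j > 0)
                       \<and> (\<forall>j<n. (transpose_mat (1\<^sub>m n - Mmat n (mat_diag n l) (A + K * mat_diag n \<delta>) K B r) *\<^sub>v w) $ j \<ge> 0)))"
proof -
  have n: "n > 0" using n2 by simp
  have D: "mat_diag n \<delta> \<in> carrier_mat n n" unfolding mat_diag_def by simp
  have nD: "nn n (mat_diag n \<delta>)" using \<delta> unfolding nn_def mat_diag_def by (auto simp: less_imp_le)
  have nA: "nn n A" and nK: "nn n K" and nB: "nn n B" using nonneg_nn A K B A_nn K_nn B_nn by auto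
  have KD: "K * mat_diag n \<delta> \<in> carrier_mat n n" using K D by simp
  have At: "A + K * mat_diag n \<delta> \<in> carrier_mat n n" using A KD by simp
  have nKD: "nn n (K * mat_diag n \<delta>)" by (rule nn_mult[OF K D nK nD])
  have nAt: "nn n (A + K * mat_diag n \<delta>)" using nA nKD unfolding nn_def by (simp add: add_ent[OF A KD])
  have Kpos: "\<exists>a<n. \<exists>b<n. 0 < K$$(a,b)"
  proof (rule ccontr)
    assume "\<not> ?thesis"
    hence "\<forall>a<n. \<forall>b<n. K$$(a,b) = 0" using nK unfolding nn_def by (meson linorder_not_le order.antisym)
    hence "K = 0\<^sub>m n n" using K by (intro eq_matI) auto
    thus False using K_nz by simp
  qed
  have Bcol: "\<forall>j<n. \<exists>i<n. 0 < B$$(i,j)"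
  proof (intro allI impI)
    fix j assume j: "j<n"
    then obtain i where i: "i<n" "B$$(i,j) \<noteq> 0" using B_col by auto
    hence "0 < B$$(i,j)" using nB j unfolding nn_def by (simp add: order.not_eq_order_implies_strict)
    thus "\<exists>i<n. 0 < B$$(i,j)" using i by auto
  qed
  have loc: "setting n (A + K * mat_diag n \<delta>) K B (mat_diag n l) l rA"
    unfolding setting_def using n At K B l nAt nK nB Kpos Bcol irr rho_lt rA_pos rA_def by blast
  interpret S: setting n "A + K * mat_diag n \<delta>" K B "mat_diag n l" l rA by (rule loc)
  have M0': "rho (S.M 0) < 1" using M0 unfolding S.M_def .
  from S.main_loc[OF M0'] show ?thesis unfolding S.M_def .
qed


end
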